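(* Let $\Sigma$ be a signed graph, $B$ a block of $\Sigma$ containing at least one circle, and $v$ a vertex of $B$. Then every circle of $B$ containing $v$ is negative if and only if $\deg_B(v)=2$ and $e_v$ is a balancing edge of $B{\downarrow}v$.
   Context: A signed graph $\Sigma=(G,\sigma)$ is a finite graph $G$ with signature $\sigma:E(G)\to\{+,-\}$. A circle is a connected 2-regular subgraph; its sign is the product of its edge signs. A block is a maximal subgraph without a cutpoint; $\deg_B(v)$ is the number of edges of $B$ incident with $v$. Switching by $\zeta:V\to\{+,-\}$ replaces $\sigma(f)$ by $\zeta(u)\sigma(f)\zeta(w)$; an edge $b$ is a balancing edge of a signed graph if it can be switched so that $b$ is the only negative edge. If $\deg_B(v)=2$ with incident edges $vv_1,vv_2$, $B{\downarrow}v$ is obtained by deleting $v$ and these edges and adding a new edge $e_v$ joining $v_1,v_2$ with sign $\sigma(vv_1)\sigma(vv_2)$. *)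

theory Defs
  imports Main
begin

text \<open>A (multi)graph is given by a vertex set V, an edge set E and an endpoint
  map ends :: 'e => 'v * 'v (an unordered edge stored with an arbitrary
  orientation; a loop has equal endpoints).\<close>

definition is_graph :: "'v set \<Rightarrow> 'e set \<Rightarrow> ('e \<Rightarrow> 'v \<times> 'v) \<Rightarrow> bool" where
  "is_graph V E ends \<longleftrightarrow> finite V \<and> finite E \<and>
     (\<forall>e\<in>E. fst (ends e) \<in> V \<and> snd (ends e) \<in> V)"

definition incident :: "('e \<Rightarrow> 'v \<times> 'v) \<Rightarrow> 'v \<Rightarrow> 'e \<Rightarrow> bool" where
  "incident ends x e \<longleftrightarrow> x = fst (ends e) \<or> x = snd (ends e)"

definition subgraph :: "('e \<Rightarrow> 'v \<times> 'v) \<Rightarrow> 'v set \<Rightarrow> 'e set \<Rightarrow> 'v set \<Rightarrow> 'e set \<Rightarrow> bool" where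
  "subgraph ends W F V E \<longleftrightarrow> W \<subseteq> V \<and> F \<subseteq> E \<and>
     (\<forall>e\<in>F. fst (ends e) \<in> W \<and> snd (ends e) \<in> W)"

definition adj :: "('e \<Rightarrow> 'v \<times> 'v) \<Rightarrow> 'e set \<Rightarrow> ('v \<times> 'v) set" where
  "adj ends F = {(a, b). \<exists>e\<in>F. ends e = (a, b) \<or> ends e = (b, a)}"

definition connected_g :: "('e \<Rightarrow> 'v \<times> 'v) \<Rightarrow> 'v set \<Rightarrow> 'e set \<Rightarrow> bool" where
  "connected_g ends W F \<longleftrightarrow> W \<noteq> {} \<and> (\<forall>a\<in>W. \<forall>b\<in>W. (a, b) \<in> (adj ends F)\<^sup>*)"

definition reach :: "('e \<Rightarrow> 'v \<times> 'v) \<Rightarrow> 'v set \<Rightarrow> 'e set \<Rightarrow> ('v \<times> 'v) set" where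
  "reach ends W F = {(a, b). a \<in> W \<and> b \<in> W \<and> (a, b) \<in> (adj ends F)\<^sup>*}"

definition ncomp :: "('e \<Rightarrow> 'v \<times> 'v) \<Rightarrow> 'v set \<Rightarrow> 'e set \<Rightarrow> nat" where
  "ncomp ends W F = card (W // reach ends W F)"

definition cutpoint :: "('e \<Rightarrow> 'v \<times> 'v) \<Rightarrow> 'v set \<Rightarrow> 'e set \<Rightarrow> 'v \<Rightarrow> bool" where
  "cutpoint ends W F x \<longleftrightarrow> x \<in> W \<and>
     ncomp ends (W - {x}) {e\<in>F. \<not> incident ends x e} > ncomp ends W F"

definition block :: "('e \<Rightarrow> 'v \<times> 'v) \<Rightarrow> 'v set \<Rightarrow> 'e set \<Rightarrow> 'v set \<Rightarrow> 'e set \<Rightarrow> bool" where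
  "block ends V E W F \<longleftrightarrow>
     subgraph ends W F V E \<and> connected_g ends W F \<and> (\<nexists>x. cutpoint ends W F x) \<and>
     (\<forall>W' F'. subgraph ends W' F' V E \<and> W \<subseteq> W' \<and> F \<subseteq> F' \<and>
        connected_g ends W' F' \<and> (\<nexists>x. cutpoint ends W' F' x) \<longrightarrow> W' = W \<and> F' = F)"

text \<open>Degree with loops counted twice (used for 2-regularity).\<close>
definition deg2 :: "('e \<Rightarrow> 'v \<times> 'v) \<Rightarrow> 'e set \<Rightarrow> 'v \<Rightarrow> nat" where
  "deg2 ends F x = card {e\<in>F. fst (ends e) = x} + card {e\<in>F. snd (ends e) = x}"

definition circle :: "('e \<Rightarrow> 'v \<times> 'v) \<Rightarrow> 'v set \<Rightarrow> 'e set \<Rightarrow> 'v set \<Rightarrow> 'e set \<Rightarrow> bool" where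
  "circle ends V E W F \<longleftrightarrow> subgraph ends W F V E \<and> connected_g ends W F \<and>
     (\<forall>x\<in>W. deg2 ends F x = 2)"

definition degree :: "('e \<Rightarrow> 'v \<times> 'v) \<Rightarrow> 'e set \<Rightarrow> 'v \<Rightarrow> nat" where
  "degree ends F x = card {e\<in>F. incident ends x e}"

definition switch_sign :: "('e \<Rightarrow> 'v \<times> 'v) \<Rightarrow> ('e \<Rightarrow> int) \<Rightarrow> ('v \<Rightarrow> int) \<Rightarrow> 'e \<Rightarrow> int" where
  "switch_sign ends \<sigma> \<zeta> e = \<zeta> (fst (ends e)) * \<sigma> e * \<zeta> (snd (ends e))"

definition balancing_edge ::
  "'v set \<Rightarrow> 'e set \<Rightarrow> ('e \<Rightarrow> 'v \<times> 'v) \<Rightarrow> ('e \<Rightarrow> int) \<Rightarrow> 'e \<Rightarrow> bool" where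
  "balancing_edge V E ends \<sigma> b \<longleftrightarrow> b \<in> E \<and>
     (\<exists>\<zeta>. (\<forall>x. \<zeta> x \<in> {1, -1}) \<and>
        (\<forall>f\<in>E. switch_sign ends \<sigma> \<zeta> f = (if f = b then -1 else 1)))"

definition other_end :: "('e \<Rightarrow> 'v \<times> 'v) \<Rightarrow> 'v \<Rightarrow> 'e \<Rightarrow> 'v" where
  "other_end ends v e = (if fst (ends e) = v then snd (ends e) else fst (ends e))"

text \<open>B down v, for the two edges e1 = v v1, e2 = v v2 at v: edges are
  Some e for the remaining edges e of B, and the new edge e_v = None.\<close>
definition down_E :: "'e set \<Rightarrow> 'e \<Rightarrow> 'e \<Rightarrow> 'e option set" where
  "down_E F e1 e2 = Some ` (F - {e1, e2}) \<union> {None}"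

definition down_ends :: "('e \<Rightarrow> 'v \<times> 'v) \<Rightarrow> 'v \<Rightarrow> 'e \<Rightarrow> 'e \<Rightarrow> 'e option \<Rightarrow> 'v \<times> 'v" where
  "down_ends ends v e1 e2 = (\<lambda>x. case x of None \<Rightarrow> (other_end ends v e1, other_end ends v e2)
                                        | Some e \<Rightarrow> ends e)"

definition down_sigma :: "('e \<Rightarrow> int) \<Rightarrow> 'e \<Rightarrow> 'e \<Rightarrow> 'e option \<Rightarrow> int" where
  "down_sigma \<sigma> e1 e2 = (\<lambda>x. case x of None \<Rightarrow> \<sigma> e1 * \<sigma> e2 | Some e \<Rightarrow> \<sigma> e)"

end

theory Submission
  imports Defs
begin

context fixes ends :: "'e \<Rightarrow> 'v \<times> 'v" begin

fun walk :: "'e set \<Rightarrow> 'v \<Rightarrow> 'e list \<Rightarrow> bool" where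
  "walk S x [] = True"
| "walk S x (e#es) = (e \<in> S \<and> incident ends x e \<and> walk S (other_end ends x e) es)"

fun wend :: "'v \<Rightarrow> 'e list \<Rightarrow> 'v" where
  "wend x [] = x"
| "wend x (e#es) = wend (other_end ends x e) es"

fun vs :: "'v \<Rightarrow> 'e list \<Rightarrow> 'v list" where
  "vs x [] = [x]"
| "vs x (e#es) = x # vs (other_end ends x e) es"

lemma vs_ne[simp]: "vs x es \<noteq> []" by (cases es) auto
lemma hd_vs[simp]: "hd (vs x es) = x" by (cases es) auto
lemma last_vs[simp]: "last (vs x es) = wend x es"
  by (induction es arbitrary: x) auto
lemma x_in_vs[simp]: "x \<in> set (vs x es)" by (cases es) auto
lemma wend_in_vs[simp]: "wend x es \<in> set (vs x es)"
  using last_in_set[OF vs_ne] last_vs by metis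

lemma walk_append[simp]: "walk S x (as @ bs) = (walk S x as \<and> walk S (wend x as) bs)"
  by (induction as arbitrary: x) auto
lemma wend_append[simp]: "wend x (as @ bs) = wend (wend x as) bs"
  by (induction as arbitrary: x) auto
lemma vs_cons_tl: "vs x es = x # tl (vs x es)" by (cases es) auto
lemma vs_append: "vs x (as @ bs) = vs x as @ tl (vs (wend x as) bs)"
  by (induction as arbitrary: x) (simp_all, metis vs_cons_tl)
lemma vs_append2: "vs x (as @ bs) = butlast (vs x as) @ vs (wend x as) bs"
  by (induction as arbitrary: x) auto
lemma length_vs: "length (vs x es) = Suc (length es)"
  by (induction es arbitrary: x) auto

lemma other_end_other: "incident ends x e \<Longrightarrow> other_end ends (other_end ends x e) e = x"
  by (auto simp: incident_def other_end_def)
lemma incident_other: "incident ends x e \<Longrightarrow> incident ends (other_end ends x e) e"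
  by (auto simp: incident_def other_end_def)

lemma walk_rev: "walk S x es \<Longrightarrow> walk S (wend x es) (rev es) \<and> wend (wend x es) (rev es) = x
   \<and> vs (wend x es) (rev es) = rev (vs x es)"
proof (induction es arbitrary: x)
  case Nil then show ?case by simp
next
  case (Cons e es)
  let ?y = "other_end ends x e"
  from Cons have w: "walk S ?y es" "e \<in> S" "incident ends x e" by auto
  from Cons.IH[OF w(1)] have ih: "walk S (wend ?y es) (rev es)" "wend (wend ?y es) (rev es) = ?y"
    "vs (wend ?y es) (rev es) = rev (vs ?y es)" by auto
  have "vs ?y [e] = [?y, x]" using other_end_other[OF w(3)] by simp
  then show ?case using ih w other_end_other[OF w(3)] incident_other[OF w(3)]
    by (auto simp: vs_append)
qed

lemma walk_mono: "walk S x es \<Longrightarrow> set es \<subseteq> T \<Longrightarrow> walk T x es"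
  by (induction es arbitrary: x) auto
lemma walk_set: "walk S x es \<Longrightarrow> set es \<subseteq> S"
  by (induction es arbitrary: x) auto

lemma walk_edge_ends: "walk S x es \<Longrightarrow> e \<in> set es \<Longrightarrow>
   fst (ends e) \<in> set (vs x es) \<and> snd (ends e) \<in> set (vs x es)"
proof (induction es arbitrary: x)
  case (Cons f es)
  then show ?case
    by (cases "e = f") (auto simp: incident_def other_end_def)
qed simp

lemma vs_subset: "walk S x es \<Longrightarrow> set (vs x es) \<subseteq> insert x (fst ` ends ` set es \<union> snd ` ends ` set es)"
proof (induction es arbitrary: x)
  case (Cons f es)
  then show ?case by (fastforce simp: incident_def other_end_def)
qed simp

lemma walk_avoid: "walk S x es \<Longrightarrow> x \<noteq> p \<Longrightarrow> (\<forall>e\<in>S. \<not> incident ends p e) \<Longrightarrow> p \<notin> set (vs x es)"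
proof (induction es arbitrary: x)
  case (Cons f es)
  then show ?case by (auto simp: incident_def other_end_def split: if_splits)
qed simp

lemma walk_split: "y \<in> set (vs x es) \<Longrightarrow> \<exists>as bs. es = as @ bs \<and> wend x as = y"
proof (induction es arbitrary: x)
  case Nil then show ?case by simp
next
  case (Cons e es)
  show ?case
  proof (cases "y = x")
    case True then show ?thesis by (intro exI[of _ "[]"] exI[of _ "e#es"]) auto
  next
    case False
    with Cons.prems have "y \<in> set (vs (other_end ends x e) es)" by simp
    from Cons.IH[OF this] obtain as bs where "es = as @ bs" "wend (other_end ends x e) as = y" by blast
    then show ?thesis by (intro exI[of _ "e#as"] exI[of _ bs]) auto
  qed
qed

lemma walk_dup: "\<not> distinct (vs x es) \<Longrightarrow> \<exists>A L R. es = A @ L @ R \<and> L \<noteq> [] \<and> wend (wend x A) L = wend x A"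
proof (induction es arbitrary: x)
  case Nil then show ?case by simp
next
  case (Cons e es)
  let ?y = "other_end ends x e"
  show ?case
  proof (cases "x \<in> set (vs ?y es)")
    case True
    from walk_split[OF this] obtain as bs where "es = as @ bs" "wend ?y as = x" by blast
    then show ?thesis by (intro exI[of _ "[]"] exI[of _ "e#as"] exI[of _ bs]) auto
  next
    case False
    with Cons.prems have "\<not> distinct (vs ?y es)" by simp
    from Cons.IH[OF this] obtain A L R where "es = A @ L @ R" "L \<noteq> []" "wend (wend ?y A) L = wend ?y A" by blast
    then show ?thesis by (intro exI[of _ "e#A"] exI[of _ L] exI[of _ R]) auto
  qed
qed

lemma first_hit0: "wend x es \<in> Z \<Longrightarrow> \<exists>as bs. es = as @ bs \<and> wend x as \<in> Z \<and> set (butlast (vs x as)) \<inter> Z = {}"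
proof (induction es arbitrary: x)
  case Nil then show ?case by (intro exI[of _ "[]"]) auto
next
  case (Cons e es)
  let ?y = "other_end ends x e"
  show ?case
  proof (cases "x \<in> Z")
    case True then show ?thesis by (intro exI[of _ "[]"] exI[of _ "e#es"]) auto
  next
    case False
    from Cons.prems have "wend ?y es \<in> Z" by simp
    from Cons.IH[OF this] obtain as bs where "es = as @ bs" "wend ?y as \<in> Z" "set (butlast (vs ?y as)) \<inter> Z = {}" by blast
    then show ?thesis using False by (intro exI[of _ "e#as"] exI[of _ bs]) auto
  qed
qed

lemma first_hit1: "wend x es \<in> Z \<Longrightarrow> es \<noteq> [] \<Longrightarrow> \<exists>as bs. es = as @ bs \<and> as \<noteq> [] \<and> wend x as \<in> Z \<and> set (tl (butlast (vs x as))) \<inter> Z = {}"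
proof (cases es)
  case (Cons e es')
  assume h: "wend x es \<in> Z"
  let ?y = "other_end ends x e"
  from h Cons have "wend ?y es' \<in> Z" by simp
  from first_hit0[OF this] obtain as bs where "es' = as @ bs" "wend ?y as \<in> Z" "set (butlast (vs ?y as)) \<inter> Z = {}" by blast
  then show ?thesis using Cons by (intro exI[of _ "e#as"] exI[of _ bs]) auto
qed simp

definition sgn :: "('e \<Rightarrow> int) \<Rightarrow> 'e list \<Rightarrow> int" where
  "sgn \<sigma> es = prod_list (map \<sigma> es)"

lemma sgn_simps[simp]: "sgn \<sigma> [] = 1" "sgn \<sigma> (e#es) = \<sigma> e * sgn \<sigma> es"
  "sgn \<sigma> (as @ bs) = sgn \<sigma> as * sgn \<sigma> bs" "sgn \<sigma> (rev es) = sgn \<sigma> es"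
  by (auto simp: sgn_def) (induction es, auto simp: mult.commute)

lemma sgn_pm: "\<forall>e\<in>set es. \<sigma> e \<in> {1,-1} \<Longrightarrow> sgn \<sigma> es \<in> {1,-1}"
  by (induction es) auto

lemma path_distinct_edges: "walk S x es \<Longrightarrow> distinct (vs x es) \<Longrightarrow> distinct es"
proof (induction es arbitrary: x)
  case (Cons e es)
  let ?y = "other_end ends x e"
  have "e \<notin> set es"
  proof
    assume "e \<in> set es"
    from walk_edge_ends[of S ?y es e] this Cons.prems have "fst (ends e) \<in> set (vs ?y es)" "snd (ends e) \<in> set (vs ?y es)" by auto
    moreover have "x = fst (ends e) \<or> x = snd (ends e)" using Cons.prems by (auto simp: incident_def)
    ultimately show False using Cons.prems by auto
  qed
  then show ?case using Cons by auto
qed simp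

lemma edges_disjoint: "walk S x es \<Longrightarrow> walk S' y fs \<Longrightarrow> (\<forall>e\<in>S. fst (ends e) \<noteq> snd (ends e)) \<Longrightarrow>
  \<forall>a b. a \<in> set (vs x es) \<inter> set (vs y fs) \<and> b \<in> set (vs x es) \<inter> set (vs y fs) \<longrightarrow> a = b \<Longrightarrow>
  set es \<inter> set fs = {}"
proof (rule ccontr)
  assume a: "walk S x es" "walk S' y fs" "\<forall>e\<in>S. fst (ends e) \<noteq> snd (ends e)"
    "\<forall>a b. a \<in> set (vs x es) \<inter> set (vs y fs) \<and> b \<in> set (vs x es) \<inter> set (vs y fs) \<longrightarrow> a = b"
    "set es \<inter> set fs \<noteq> {}"
  then obtain e where e: "e \<in> set es" "e \<in> set fs" by blast
  from walk_edge_ends[OF a(1) e(1)] walk_edge_ends[OF a(2) e(2)] a(4)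
  have "fst (ends e) = snd (ends e)" by blast
  moreover have "e \<in> S" using walk_set[OF a(1)] e by auto
  ultimately show False using a(3) by auto
qed

lemma rtrancl_walk: "(a, b) \<in> (adj ends S)\<^sup>* \<Longrightarrow> \<exists>es. walk S a es \<and> wend a es = b"
proof (induction rule: rtrancl_induct)
  case base then show ?case by (intro exI[of _ "[]"]) auto
next
  case (step y z)
  then obtain es where es: "walk S a es" "wend a es = y" by blast
  from step(2) obtain e where e: "e \<in> S" "ends e = (y, z) \<or> ends e = (z, y)" by (auto simp: adj_def)
  then have "incident ends y e" "other_end ends y e = z" by (cases "ends e"; auto simp: incident_def other_end_def)+
  then show ?case using es e by (intro exI[of _ "es @ [e]"]) auto
qed

lemma walk_rtrancl: "walk S x es \<Longrightarrow> y \<in> set (vs x es) \<Longrightarrow> (x, y) \<in> (adj ends (set es))\<^sup>*"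
proof (induction es arbitrary: x)
  case (Cons e es)
  let ?z = "other_end ends x e"
  have "(x, ?z) \<in> adj ends (set (e#es))" using Cons.prems
    by (auto simp: adj_def incident_def other_end_def) (metis prod.collapse)+
  moreover have "(adj ends (set es))\<^sup>* \<subseteq> (adj ends (set (e#es)))\<^sup>*"
    by (rule rtrancl_mono) (auto simp: adj_def)
  ultimately show ?case using Cons by (auto intro: converse_rtrancl_into_rtrancl)
qed simp

lemma walk_to_path: "walk S x es \<Longrightarrow> \<exists>ps. walk S x ps \<and> wend x ps = wend x es \<and> distinct (vs x ps)
   \<and> set ps \<subseteq> set es \<and> set (vs x ps) \<subseteq> set (vs x es)"
proof (induction es arbitrary: x)
  case Nil then show ?case by (intro exI[of _ "[]"]) auto
next
  case (Cons e es)
  let ?y = "other_end ends x e"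
  from Cons.prems have "walk S ?y es" by simp
  from Cons.IH[OF this] obtain ps where ps: "walk S ?y ps" "wend ?y ps = wend ?y es" "distinct (vs ?y ps)"
    "set ps \<subseteq> set es" "set (vs ?y ps) \<subseteq> set (vs ?y es)" by blast
  show ?case
  proof (cases "x \<in> set (vs ?y ps)")
    case False
    then show ?thesis using ps Cons.prems by (intro exI[of _ "e#ps"]) auto
  next
    case True
    from walk_split[OF True] obtain as bs where ab: "ps = as @ bs" "wend ?y as = x" by blast
    have "distinct (vs x bs)" using ps(3) ab by (simp add: vs_append2)
    moreover have "set (vs x bs) \<subseteq> set (vs ?y ps)" using ab by (auto simp: vs_append2)
    ultimately show ?thesis using ps ab by (intro exI[of _ bs]) auto
  qed
qed

lemma vs_snoc_last: "vs x as = butlast (vs x as) @ [wend x as]"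
  by (metis append_butlast_last_id last_vs vs_ne)

lemma set_vs_append: "set (vs x (as @ bs)) = set (vs x as) \<union> set (vs (wend x as) bs)"
proof -
  have "set (vs x as) = set (butlast (vs x as)) \<union> {wend x as}" by (subst vs_snoc_last) simp
  moreover have "wend x as \<in> set (vs (wend x as) bs)" by simp
  ultimately show ?thesis by (auto simp: vs_append2)
qed

lemma butlast_vs_append: "butlast (vs x (as @ bs)) = butlast (vs x as) @ butlast (vs (wend x as) bs)"
  by (simp add: vs_append2 butlast_append)

lemma tl_vs_append: "tl (vs x (as @ bs)) = tl (vs x as) @ tl (vs (wend x as) bs)"
  by (simp add: vs_append)

lemma tl_vs_ne: "as \<noteq> [] \<Longrightarrow> tl (vs x as) \<noteq> []"
  using length_vs[of x as] by (cases "vs x as") auto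

lemma butlast_vs_ne: "as \<noteq> [] \<Longrightarrow> butlast (vs x as) = x # butlast (tl (vs x as))"
  using tl_vs_ne[of as x] vs_cons_tl[of x as] by (metis butlast.simps(2))

lemma last_tl_vs: "as \<noteq> [] \<Longrightarrow> last (tl (vs x as)) = wend x as"
  using tl_vs_ne[of as x] by (metis last_tl last_vs vs_ne)

lemma distinct_closed: "distinct (vs x as) \<Longrightarrow> wend x as = x \<Longrightarrow> as = []"
proof (rule ccontr)
  assume a: "distinct (vs x as)" "wend x as = x" "as \<noteq> []"
  have "x \<in> set (tl (vs x as))" using last_tl_vs[OF a(3)] a(2) tl_vs_ne[OF a(3)] by (metis last_in_set)
  then show False using a(1) vs_cons_tl[of x as] by (metis distinct.simps(2))
qed

lemma path_end_edge:
  assumes "walk S a es" "distinct (vs a es)" "e \<in> set es" "incident ends a e" "incident ends (wend a es) e"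
    "a \<noteq> wend a es"
  shows "es = [e]"
proof (cases es)
  case Nil then show ?thesis using assms by simp
next
  case (Cons f es')
  let ?a' = "other_end ends a f"
  show ?thesis
  proof (cases "f = e")
    case True
    then have "?a' = wend a es" using assms(4,5,6) by (auto simp: incident_def other_end_def)
    moreover have "distinct (vs ?a' es')" "wend ?a' es' = wend a es" using assms(2) Cons by auto
    ultimately have "es' = []" using distinct_closed by metis
    then show ?thesis using Cons True by simp
  next
    case False
    then have "e \<in> set es'" using assms(3) Cons by simp
    moreover have "walk S ?a' es'" using assms(1) Cons by simp
    ultimately have "fst (ends e) \<in> set (vs ?a' es') \<and> snd (ends e) \<in> set (vs ?a' es')"
      using walk_edge_ends by metis
    then have "a \<in> set (vs ?a' es')" using assms(4) by (auto simp: incident_def)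
    then show ?thesis using assms(2) Cons by simp
  qed
qed

lemma distinct_vs_append: "distinct (vs x (as @ bs)) \<Longrightarrow> distinct (vs x as) \<and> distinct (vs (wend x as) bs)"
proof
  assume d: "distinct (vs x (as @ bs))"
  then show "distinct (vs x as)" by (simp add: vs_append)
  from d show "distinct (vs (wend x as) bs)" by (simp add: vs_append2)
qed

lemma neg_circ:
  assumes "walk S x c" "wend x c = x" "sgn \<sigma> c = -1"
    and ll: "\<forall>e\<in>S. fst (ends e) \<noteq> snd (ends e)" and sg: "\<forall>e\<in>S. \<sigma> e \<in> {1,-1}"
  shows "\<exists>y q. walk S y q \<and> wend y q = y \<and> q \<noteq> [] \<and> distinct (tl (vs y q)) \<and> distinct q
     \<and> sgn \<sigma> q = -1 \<and> set (vs y q) \<subseteq> set (vs x c)"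
  using assms(1-3)
proof (induction "length c" arbitrary: x c rule: less_induct)
  case less
  show ?case
  proof (cases c)
    case Nil then show ?thesis using less by simp
  next
    case (Cons e c')
    let ?z = "other_end ends x e"
    have wc': "walk S ?z c'" "wend ?z c' = x" "e \<in> S" "incident ends x e" using less Cons by auto
    have xz: "x \<noteq> ?z" using wc'(3,4) ll by (auto simp: incident_def other_end_def)
    show ?thesis
    proof (cases "distinct (vs ?z c')")
      case True
      have "e \<notin> set c'"
      proof
        assume "e \<in> set c'"
        moreover have "incident ends ?z e" using incident_other[OF wc'(4)] .
        ultimately have "c' = [e]" using path_end_edge[OF wc'(1) True] wc'(2,4) xz by metis
        then have "sgn \<sigma> c = \<sigma> e * \<sigma> e" using Cons by simp
        then show False using less(4) sg wc'(3) by auto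
      qed
      then have "distinct c" using Cons path_distinct_edges[OF wc'(1) True] by simp
      then show ?thesis using less Cons True by (intro exI[of _ x] exI[of _ c]) auto
    next
      case False
      from walk_dup[OF False] obtain A L R where ALR: "c' = A @ L @ R" "L \<noteq> []"
        "wend (wend ?z A) L = wend ?z A" by blast
      let ?p = "wend ?z A"
      let ?c1 = "e # A @ R"
      have w1: "walk S x ?c1" "wend x ?c1 = x" using wc' ALR by auto
      have w2: "walk S ?p L" "wend ?p L = ?p" using wc' ALR by auto
      have l1: "length ?c1 < length c" "length L < length c" using Cons ALR by auto
      have s: "sgn \<sigma> c = sgn \<sigma> ?c1 * sgn \<sigma> L" using Cons ALR by simp
      have v1: "set (vs x ?c1) \<subseteq> set (vs x c)" using Cons ALR by (auto simp: set_vs_append)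
      have v2: "set (vs ?p L) \<subseteq> set (vs x c)" using Cons ALR by (auto simp: set_vs_append)
      have "set ?c1 \<subseteq> S" "set L \<subseteq> S" using walk_set w1 w2 by blast+
      then have "sgn \<sigma> ?c1 \<in> {1,-1}" "sgn \<sigma> L \<in> {1,-1}" using sgn_pm sg by blast+
      then have "sgn \<sigma> ?c1 = -1 \<or> sgn \<sigma> L = -1" using s less(4) by auto
      then show ?thesis
      proof
        assume "sgn \<sigma> ?c1 = -1"
        from less(1)[OF l1(1) w1 this] v1 show ?thesis by blast
      next
        assume "sgn \<sigma> L = -1"
        from less(1)[OF l1(2) w2 this] v2 show ?thesis by blast
      qed
    qed
  qed
qed

lemma vs_shape: "as \<noteq> [] \<Longrightarrow> set (vs x as) = insert x (insert (wend x as) (set (tl (butlast (vs x as)))))"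
proof -
  assume ne: "as \<noteq> []"
  obtain l where l: "vs x as = x # l" using vs_cons_tl by blast
  have "l \<noteq> []" "last l = wend x as" using tl_vs_ne[OF ne, of x] last_tl_vs[OF ne, of x] l by auto
  then obtain bl where bl: "l = bl @ [wend x as]" by (metis append_butlast_last_id)
  then show ?thesis using l by auto
qed

lemma seg_path:
  assumes "walk S x es" "distinct (vs x es)" "x \<in> X" "wend x es \<in> Y" "X \<inter> Y = {}"
  shows "\<exists>d D. d \<in> X \<and> walk S d D \<and> wend d D \<in> Y \<and> distinct (vs d D) \<and> set (vs d D) \<subseteq> set (vs x es)
     \<and> set (vs d D) \<inter> X = {d} \<and> set (vs d D) \<inter> Y = {wend d D}"
  using assms
proof (induction "length es" arbitrary: x es rule: less_induct)
  case less
  have ne: "es \<noteq> []" using less.prems by auto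
  from first_hit1[OF less.prems(4)[THEN UnI2[of _ _ X]] ne] obtain as bs where
    ab: "es = as @ bs" "as \<noteq> []" "wend x as \<in> X \<union> Y" "set (tl (butlast (vs x as))) \<inter> (X \<union> Y) = {}" by blast
  have da: "distinct (vs x as)" "distinct (vs (wend x as) bs)" using less.prems(2) ab(1) distinct_vs_append by blast+
  have wa: "walk S x as" "walk S (wend x as) bs" using less.prems(1) ab(1) by auto
  show ?case
  proof (cases "wend x as \<in> Y")
    case True
    have sub: "set (vs x as) \<subseteq> set (vs x es)" using ab(1) by (simp add: set_vs_append)
    have sh: "set (vs x as) = insert x (insert (wend x as) (set (tl (butlast (vs x as)))))" by (rule vs_shape[OF ab(2)])
    have n1: "x \<notin> Y" "wend x as \<notin> X" using True less.prems(3,5) by blast+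
    have i1: "set (vs x as) \<inter> X = {x}" using sh ab(4) less.prems(3) n1 by blast
    have i2: "set (vs x as) \<inter> Y = {wend x as}"
    proof -
      have "set (tl (butlast (vs x as))) \<inter> Y = {}" using ab(4) by blast
      then show ?thesis unfolding sh using True n1(1) by auto
    qed
    show ?thesis apply (rule exI[of _ x], rule exI[of _ as]) using wa da True less.prems(3) sub i1 i2 by simp
  next
    case False
    have h1: "wend x as \<in> X" using ab(3) False by blast
    have h2: "length bs < length es" using ab by simp
    have h3: "wend (wend x as) bs \<in> Y" using less.prems(4) ab(1) by simp
    note IH = less.hyps[OF h2 wa(2) da(2) h1 h3 less.prems(5)]
    have sub: "set (vs (wend x as) bs) \<subseteq> set (vs x es)" using ab(1) by (simp add: set_vs_append)
    from IH obtain d D where H: "d \<in> X" "walk S d D" "wend d D \<in> Y" "distinct (vs d D)"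
      "set (vs d D) \<subseteq> set (vs (wend x as) bs)" "set (vs d D) \<inter> X = {d}" "set (vs d D) \<inter> Y = {wend d D}"
      by (elim exE conjE) 
    have "set (vs d D) \<subseteq> set (vs x es)" using H(5) sub by (rule subset_trans)
    then show ?thesis apply (rule_tac exI[of _ d], rule_tac exI[of _ D]) using H by simp
  qed
qed

lemma seg:
  assumes "walk S x es" "x \<in> X" "wend x es \<in> Y" "X \<inter> Y = {}"
  shows "\<exists>d D. d \<in> X \<and> walk S d D \<and> wend d D \<in> Y \<and> distinct (vs d D) \<and> set (vs d D) \<subseteq> set (vs x es)
     \<and> set (vs d D) \<inter> X = {d} \<and> set (vs d D) \<inter> Y = {wend d D}"
proof -
  obtain ps where ps: "walk S x ps" "wend x ps = wend x es" "distinct (vs x ps)" "set (vs x ps) \<subseteq> set (vs x es)"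
    using walk_to_path[OF assms(1)] by blast
  from seg_path[OF ps(1,3) assms(2) _ assms(4)] ps(2,4) assms(3) show ?thesis by (metis subset_trans)
qed

lemma set_butlast_dist: "distinct (vs x D) \<Longrightarrow> set (butlast (vs x D)) = set (vs x D) - {wend x D}"
proof -
  assume d: "distinct (vs x D)"
  obtain bl w where e: "vs x D = bl @ [w]" "w = wend x D"
    using vs_snoc_last by blast
  then have "butlast (vs x D) = bl" by simp
  then show ?thesis using d e by auto
qed

lemma set_tl_dist: "distinct (vs x D) \<Longrightarrow> set (tl (vs x D)) = set (vs x D) - {x}"
proof -
  assume d: "distinct (vs x D)"
  obtain l where e: "vs x D = x # l" using vs_cons_tl by blast
  then show ?thesis using d by auto
qed

lemma split_tl: "as \<noteq> [] \<Longrightarrow> set (vs (wend x as) bs) \<subseteq> set (tl (vs x (as @ bs)))"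
proof -
  assume "as \<noteq> []"
  then have "wend x as \<in> set (tl (vs x as))" using last_tl_vs tl_vs_ne by (metis last_in_set)
  moreover have "set (vs (wend x as) bs) = insert (wend x as) (set (tl (vs (wend x as) bs)))"
    by (subst vs_cons_tl) simp
  ultimately show ?thesis by (auto simp: tl_vs_append)
qed

lemma split_butlast: "set (butlast (vs (wend x as) bs)) \<subseteq> set (butlast (vs x (as @ bs)))"
  by (simp add: butlast_vs_append)

end

lemma count_distinct: "distinct xs \<Longrightarrow> count_list xs y = (if y \<in> set xs then 1 else 0)"
  by (induction xs) auto

lemma incid_count: "walk ends S x c \<Longrightarrow> (\<forall>e\<in>S. fst (ends e) \<noteq> snd (ends e)) \<Longrightarrow>
  length (filter (incident ends y) c) = count_list (butlast (vs ends x c)) y + count_list (tl (vs ends x c)) y"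
proof (induction c arbitrary: x)
  case (Cons e c)
  let ?z = "other_end ends x e"
  have "incident ends y e = (y = x \<or> y = ?z)" "x \<noteq> ?z" using Cons.prems
    by (auto simp: incident_def other_end_def)
  moreover have "butlast (vs ends x (e#c)) = x # butlast (vs ends ?z c)" by simp
  moreover have "tl (vs ends x (e#c)) = vs ends ?z c" by simp
  moreover have "count_list (vs ends ?z c) y = (if ?z = y then 1 else 0) + count_list (tl (vs ends ?z c)) y"
    by (subst vs_cons_tl) simp
  moreover have "walk ends S ?z c" using Cons.prems by simp
  ultimately show ?case using Cons.IH[of ?z] Cons.prems(2) by (auto simp del: vs.simps)
qed simp

lemma fst_snd_count: "(\<forall>e\<in>set c. fst (ends e) \<noteq> snd (ends e)) \<Longrightarrow>
  length (filter (\<lambda>e. fst (ends e) = y) c) + length (filter (\<lambda>e. snd (ends e) = y) c) = length (filter (incident ends y) c)"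
  by (induction c) (auto simp: incident_def)

lemma closed_vs: assumes "wend ends x c = x" "c \<noteq> []"
  shows "\<exists>bl. vs ends x c = x # bl @ [x]"
proof -
  obtain l where l: "vs ends x c = x # l" using vs_cons_tl by metis
  have "l \<noteq> []" using assms l length_vs[of ends x c] by (cases c) auto
  have "last l = x" using assms l \<open>l \<noteq> []\<close> last_vs[of ends x c] by simp
  then have "l = butlast l @ [x]" using append_butlast_last_id[OF \<open>l \<noteq> []\<close>] by simp
  then have "vs ends x c = x # butlast l @ [x]" using l by simp
  then show ?thesis by blast
qed

lemma closed_count: assumes "wend ends x c = x" "c \<noteq> []"
  shows "count_list (butlast (vs ends x c)) y = count_list (tl (vs ends x c)) y"
proof -
  obtain bl where "vs ends x c = x # bl @ [x]" using closed_vs[OF assms] by blast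
  then show ?thesis by (simp add: butlast_append)
qed

locale sg =
  fixes ends :: "'e \<Rightarrow> 'v \<times> 'v" and W :: "'v set" and F :: "'e set" and \<sigma> :: "'e \<Rightarrow> int"
  assumes finW: "finite W" and finF: "finite F"
    and endsW: "\<forall>e\<in>F. fst (ends e) \<in> W \<and> snd (ends e) \<in> W"
    and loopless: "\<forall>e\<in>F. fst (ends e) \<noteq> snd (ends e)"
    and conn: "connected_g ends W F"
    and nocut: "\<nexists>x. cutpoint ends W F x"
    and sig: "\<forall>e\<in>F. \<sigma> e \<in> {1, -1}"
begin

lemma vs_W: "walk ends S x es \<Longrightarrow> S \<subseteq> F \<Longrightarrow> x \<in> W \<Longrightarrow> set (vs ends x es) \<subseteq> W"
  using vs_subset[of ends S x es] walk_set[of ends S x es] endsW by fastforce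

lemma sgn_sq: "set es \<subseteq> F \<Longrightarrow> sgn \<sigma> es * sgn \<sigma> es = 1"
proof -
  assume "set es \<subseteq> F"
  then have "sgn \<sigma> es \<in> {1,-1}" using sgn_pm[of es \<sigma>] sig by blast
  then show ?thesis by auto
qed

lemma cyc:
  assumes w: "walk ends F x c" "wend ends x c = x" "c \<noteq> []" "distinct (tl (vs ends x c))" "distinct c" "x \<in> W"
  shows "circle ends W F (set (vs ends x c)) (set c) \<and> (\<Prod>e\<in>set c. \<sigma> e) = sgn \<sigma> c"
proof -
  have cF: "set c \<subseteq> F" using walk_set[OF w(1)] .
  have sub: "subgraph ends (set (vs ends x c)) (set c) W F"
    unfolding subgraph_def using vs_W[OF w(1) _ w(6)] cF walk_edge_ends[OF w(1)] by auto
  have sym: "sym (adj ends (set c))" by (auto simp: sym_def adj_def)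
  have "(a, b) \<in> (adj ends (set c))\<^sup>*" if "a \<in> set (vs ends x c)" "b \<in> set (vs ends x c)" for a b
  proof -
    have "(x, a) \<in> (adj ends (set c))\<^sup>*" "(x, b) \<in> (adj ends (set c))\<^sup>*"
      using walk_rtrancl[OF w(1)] that by auto
    moreover have "(a, x) \<in> (adj ends (set c))\<^sup>*" using calculation(1) sym_rtrancl[OF sym]
      by (auto simp: sym_def)
    ultimately show ?thesis by (meson rtrancl_trans)
  qed
  then have con: "connected_g ends (set (vs ends x c)) (set c)" unfolding connected_g_def by auto
  have lc: "\<forall>e\<in>set c. fst (ends e) \<noteq> snd (ends e)" using cF loopless by auto
  have deg: "deg2 ends (set c) y = 2" if "y \<in> set (vs ends x c)" for y
  proof -
    have "deg2 ends (set c) y = length (filter (\<lambda>e. fst (ends e) = y) c) + length (filter (\<lambda>e. snd (ends e) = y) c)"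
      unfolding deg2_def using distinct_length_filter[OF w(5)] by (metis Collect_conj_eq Int_commute Collect_mem_eq)
    also have "\<dots> = length (filter (incident ends y) c)" using fst_snd_count[OF lc] .
    also have "\<dots> = count_list (butlast (vs ends x c)) y + count_list (tl (vs ends x c)) y"
      using incid_count[OF w(1) loopless] .
    also have "\<dots> = 2 * count_list (tl (vs ends x c)) y" using closed_count[OF w(2,3)] by simp
    also have "\<dots> = 2"
    proof -
      have "y \<in> set (tl (vs ends x c))"
      proof -
        obtain bl where "vs ends x c = x # bl @ [x]" using closed_vs[OF w(2,3)] by blast
        then show ?thesis using that by auto
      qed
      then show ?thesis using count_distinct[OF w(4)] by simp
    qed
    finally show ?thesis .
  qed
  have "(\<Prod>e\<in>set c. \<sigma> e) = sgn \<sigma> c" unfolding sgn_def using prod.distinct_set_conv_list[OF w(5)] by simp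
  then show ?thesis using sub con deg unfolding circle_def by auto
qed

lemma ncomp1: "ncomp ends W F = 1"
proof -
  have "reach ends W F = W \<times> W" using conn unfolding reach_def connected_g_def by auto
  moreover have "W // (W \<times> W) = {W}" using conn unfolding connected_g_def quotient_def by auto
  ultimately show ?thesis unfolding ncomp_def by simp
qed

lemma conn_minus: assumes "x \<in> W" "a \<in> W - {x}" "b \<in> W - {x}"
  shows "(a, b) \<in> (adj ends {e\<in>F. \<not> incident ends x e})\<^sup>*"
proof (rule ccontr)
  assume nab: "(a, b) \<notin> (adj ends {e\<in>F. \<not> incident ends x e})\<^sup>*"
  let ?W = "W - {x}" and ?F = "{e\<in>F. \<not> incident ends x e}"
  let ?R = "reach ends ?W ?F"
  have fin: "finite (?W // ?R)" by (rule finite_quotient) (use finW in \<open>auto simp: reach_def\<close>)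
  have A: "?R `` {a} \<in> ?W // ?R" "?R `` {b} \<in> ?W // ?R" using assms by (auto simp: quotient_def)
  have "b \<in> ?R `` {b}" "b \<notin> ?R `` {a}" using assms nab by (auto simp: reach_def)
  then have "?R `` {a} \<noteq> ?R `` {b}" by blast
  then have "card {?R `` {a}, ?R `` {b}} = 2" by simp
  moreover have "card {?R `` {a}, ?R `` {b}} \<le> card (?W // ?R)" using A fin by (intro card_mono) auto
  ultimately have "ncomp ends ?W ?F > ncomp ends W F" using ncomp1 unfolding ncomp_def by simp
  then have "cutpoint ends W F x" using assms unfolding cutpoint_def by simp
  then show False using nocut by blast
qed

lemma path_minus: assumes "x \<in> W" "a \<in> W - {x}" "b \<in> W - {x}"
  shows "\<exists>ps. walk ends {e\<in>F. \<not> incident ends x e} a ps \<and> wend ends a ps = b \<and> distinct (vs ends a ps)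
    \<and> set (vs ends a ps) \<subseteq> W - {x}"
proof -
  let ?F = "{e\<in>F. \<not> incident ends x e}"
  obtain es where es: "walk ends ?F a es" "wend ends a es = b" using rtrancl_walk[OF conn_minus[OF assms]] by blast
  obtain ps where ps: "walk ends ?F a ps" "wend ends a ps = b" "distinct (vs ends a ps)"
    using walk_to_path[OF es(1)] es(2) by metis
  have "set (vs ends a ps) \<subseteq> W" using vs_W[OF ps(1)] assms by auto
  moreover have "x \<notin> set (vs ends a ps)" using walk_avoid[OF ps(1)] assms by auto
  ultimately show ?thesis using ps by blast
qed

lemma path_all: assumes "a \<in> W" "b \<in> W"
  shows "\<exists>ps. walk ends F a ps \<and> wend ends a ps = b \<and> distinct (vs ends a ps)"
proof -
  have "(a, b) \<in> (adj ends F)\<^sup>*" using conn assms unfolding connected_g_def by auto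
  from rtrancl_walk[OF this] obtain es where es: "walk ends F a es" "wend ends a es = b" by blast
  then show ?thesis using walk_to_path[OF es(1)] by metis
qed

end

context sg begin

definition INV where "INV v T A1 A2 C \<longleftrightarrow>
 walk ends F v (A1@A2) \<and> distinct (vs ends v (A1@A2)) \<and> wend ends v (A1@A2) \<in> T \<and>
 set (butlast (vs ends v (A1@A2))) \<inter> T = {} \<and> A2 \<noteq> [] \<and>
 walk ends F (wend ends v A1) C \<and> distinct (vs ends (wend ends v A1) C) \<and> wend ends (wend ends v A1) C \<in> T \<and>
 wend ends (wend ends v A1) C \<noteq> wend ends v (A1@A2) \<and>
 set (vs ends (wend ends v A1) C) \<inter> set (vs ends v (A1@A2)) = {wend ends v A1} \<and>
 set (butlast (vs ends (wend ends v A1) C)) \<inter> T = {}"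

lemma fan_step:
  assumes inv: "INV v T A1 A2 C" and ne: "A1 \<noteq> []" and vW: "v \<in> W" and TW: "T \<subseteq> W"
  shows "\<exists>A1' A2' C'. INV v T A1' A2' C' \<and> length A1' < length A1"
proof -
  define p where "p = wend ends v A1"
  define a where "a = wend ends p A2"
  define c where "c = wend ends p C"
  define XL where "XL = butlast (vs ends v A1)"
  define L2 where "L2 = tl (vs ends p A2)"
  define LC where "LC = tl (vs ends p C)"
  from inv have i: "walk ends F v (A1@A2)" "distinct (vs ends v (A1@A2))" "a \<in> T"
    "set (butlast (vs ends v (A1@A2))) \<inter> T = {}" "A2 \<noteq> []"
    "walk ends F p C" "distinct (vs ends p C)" "c \<in> T" "c \<noteq> a"
    "set (vs ends p C) \<inter> set (vs ends v (A1@A2)) = {p}" "set (butlast (vs ends p C)) \<inter> T = {}"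
    unfolding INV_def p_def a_def c_def by auto
  have vsA: "vs ends v (A1@A2) = XL @ p # L2" unfolding XL_def L2_def p_def
    by (simp add: vs_append2) (metis vs_cons_tl)
  have vsC: "vs ends p C = p # LC" unfolding LC_def by (rule vs_cons_tl)
  have vsA2: "vs ends p A2 = p # L2" unfolding L2_def by (rule vs_cons_tl)
  have L2ne: "L2 \<noteq> []" "last L2 = a" using tl_vs_ne[OF i(5), of ends p] last_tl_vs[OF i(5), of ends p] unfolding L2_def a_def by auto
  have dA: "distinct (XL @ p # L2)" using i(2) vsA by simp
  have blA: "butlast (vs ends v (A1@A2)) = XL @ p # butlast L2" using vsA L2ne by (simp add: butlast_append)
  have XT: "set XL \<inter> T = {}" "p \<notin> T" "set (butlast L2) \<inter> T = {}" using i(4) blA by auto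
  have CA: "set LC \<inter> set XL = {}" "set LC \<inter> set L2 = {}" "p \<notin> set LC"
    using i(10) i(7) vsA vsC by auto
  have Cne: "C \<noteq> []" using i(8) XT(2) unfolding c_def by auto
  have LCne: "LC \<noteq> []" "last LC = c" using tl_vs_ne[OF Cne, of ends p] last_tl_vs[OF Cne, of ends p] unfolding LC_def c_def by auto
  have blC: "butlast (vs ends p C) = p # butlast LC" using vsC LCne by simp
  have CT: "set (butlast LC) \<inter> T = {}" using i(11) blC by auto
  have aL2: "a \<in> set L2" using L2ne by (metis last_in_set)
  have cLC: "c \<in> set LC" using LCne by (metis last_in_set)
  have vX: "v \<in> set XL" using butlast_vs_ne[OF ne, of ends v] unfolding XL_def by simp
  have XLsub: "set XL \<subseteq> set (vs ends v A1)" unfolding XL_def by (meson in_set_butlastD subsetI)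
  have AW: "set (vs ends v (A1@A2)) \<subseteq> W" using vs_W[OF i(1) _ vW] by simp
  have pW: "p \<in> W" using AW vsA by auto
  have aW: "a \<in> W" using AW vsA aL2 by auto
  have pa: "a \<noteq> p" "v \<noteq> p" using dA aL2 vX by auto
  define Fp where "Fp = {e\<in>F. \<not> incident ends p e}"
  have h: "v \<in> W - {p}" "a \<in> W - {p}" using pa vW aW by auto
  obtain ps where ps: "walk ends Fp v ps" "wend ends v ps = a" "set (vs ends v ps) \<subseteq> W - {p}"
    using path_minus[OF pW h] unfolding Fp_def[symmetric] by blast
  define X where "X = set XL"
  define Y where "Y = set L2 \<union> set LC \<union> T"
  have XY: "X \<inter> Y = {}" using dA CA XT unfolding X_def Y_def by auto
  obtain d D where D: "d \<in> X" "walk ends Fp d D" "wend ends d D \<in> Y" "distinct (vs ends d D)"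
    "set (vs ends d D) \<subseteq> set (vs ends v ps)" "set (vs ends d D) \<inter> X = {d}" "set (vs ends d D) \<inter> Y = {wend ends d D}"
  proof -
    have "v \<in> X" "wend ends v ps \<in> Y" using vX ps(2) aL2 unfolding X_def Y_def by auto
    from seg[OF ps(1) this XY] show ?thesis using that by blast
  qed
  define y where "y = wend ends d D"
  have "Fp \<subseteq> F" unfolding Fp_def by auto
  then have DF: "walk ends F d D" using walk_mono[OF D(2)] walk_set[OF D(2)] by blast
  have pD: "p \<notin> set (vs ends d D)" using D(5) ps(3) by auto
  have blD: "set (butlast (vs ends d D)) \<inter> Y = {}" using set_butlast_dist[OF D(4)] D(7) by auto
  have dA1: "d \<in> set (vs ends v A1)" using D(1) XLsub unfolding X_def by blast
  obtain A11 A12 where A1s: "A1 = A11 @ A12" "wend ends v A11 = d" using walk_split[OF dA1] by blast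
  have pX: "p \<notin> X" using dA unfolding X_def by simp
  have A12ne: "A12 \<noteq> []"
  proof
    assume "A12 = []"
    then have "d = p" using A1s unfolding p_def by simp
    then show False using pX D(1) by simp
  qed
  have len: "length A11 < length A1" using A1s A12ne by simp
  have wA1: "walk ends F v A1" "walk ends F p A2" using i(1) unfolding p_def by auto
  show ?thesis
  proof (cases "y \<in> set L2")
    case True
    obtain A21 A22 where A2s: "A2 = A21 @ A22" "wend ends p A21 = y"
      using walk_split[of y ends p A2] True vsA2 by auto
    have A21ne: "A21 \<noteq> []"
    proof
      assume "A21 = []"
      then have "y = p" using A2s by simp
      then show False using True dA by simp
    qed
    have s22: "set (vs ends y A22) \<subseteq> set L2" using split_tl[OF A21ne, of ends p A22] A2s unfolding L2_def by simp
    have b22: "set (butlast (vs ends y A22)) \<subseteq> set (butlast (vs ends p A2))" using split_butlast[of ends p A21 A22] A2s by simp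
    have dA2: "distinct (vs ends p A2)" using distinct_vs_append[of ends v A1 A2] i(2) unfolding p_def by blast
    have d22: "distinct (vs ends y A22)" using distinct_vs_append[of ends p A21 A22] dA2 A2s by simp
    have "INV v T A11 (A12 @ C) (D @ A22)"
    proof -
      have e1: "A11 @ A12 @ C = A1 @ C" using A1s by simp
      have vsN: "vs ends v (A1 @ C) = XL @ p # LC" unfolding XL_def p_def
        by (simp add: vs_append2 LC_def[unfolded p_def]) (metis vs_cons_tl)
      have blN: "butlast (vs ends v (A1 @ C)) = XL @ p # butlast LC" using vsN LCne by (simp add: butlast_append)
      have wN: "walk ends F v (A1 @ C)" using wA1 i(6) unfolding p_def by simp
      have wD: "walk ends F d (D @ A22)" using DF wA1(2) A2s by (simp add: y_def[symmetric])
      have vsD: "vs ends d (D @ A22) = butlast (vs ends d D) @ vs ends y A22" by (simp add: vs_append2 y_def)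
      have "wend ends d (D @ A22) = a" using A2s unfolding a_def y_def by simp
      moreover have "distinct (vs ends d (D @ A22))" using vsD blD s22 d22 D(4) unfolding Y_def
        by (auto simp: distinct_butlast)
      moreover have "set (vs ends d (D @ A22)) \<inter> set (vs ends v (A1 @ C)) = {d}"
      proof -
        have "set (vs ends d (D @ A22)) \<subseteq> set (vs ends d D) \<union> set L2" using vsD s22 in_set_butlastD by fastforce
        moreover have "d \<in> set (vs ends d (D @ A22))" by simp
        moreover have "d \<in> set XL" using D(1) X_def by simp
        moreover have "set (vs ends d D) \<inter> set LC = {}"
        proof -
          have "set (vs ends d D) \<inter> set LC \<subseteq> set (vs ends d D) \<inter> Y" unfolding Y_def by auto
          then have "set (vs ends d D) \<inter> set LC \<subseteq> {y}" using D(7) unfolding y_def by simp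
          then show ?thesis using True CA by auto
        qed
        ultimately show ?thesis using vsN D(6,7) pD CA dA True unfolding X_def Y_def y_def by auto
      qed
      moreover have "set (butlast (vs ends d (D @ A22))) \<inter> T = {}"
        using blD b22 i(4) butlast_vs_append[of ends d D A22] unfolding Y_def y_def
        by (auto simp: butlast_vs_append[of ends v A1 A2] p_def)
      moreover have "distinct (vs ends v (A1 @ C))" using vsN dA CA i(7) vsC by auto
      moreover have "set (butlast (vs ends v (A1 @ C))) \<inter> T = {}" using blN XT CT by auto
      moreover have "wend ends v (A1 @ C) = c" unfolding c_def p_def by simp
      ultimately show ?thesis unfolding INV_def e1 A1s(2)[symmetric] using wN wD i(3,8,9) Cne
        by (auto simp: A1s)
    qed
    then show ?thesis using len by blast
  next
    case False
    note nL2 = False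
    have DL2: "set (vs ends d D) \<inter> set L2 = {}"
    proof -
      have "set (vs ends d D) \<inter> set L2 \<subseteq> set (vs ends d D) \<inter> Y" unfolding Y_def by auto
      then have "set (vs ends d D) \<inter> set L2 \<subseteq> {y}" using D(7) unfolding y_def by simp
      then show ?thesis using nL2 by auto
    qed
    show ?thesis
    proof (cases "y \<in> set LC")
      case True
      obtain C1 C2 where Cs: "C = C1 @ C2" "wend ends p C1 = y"
        using walk_split[of y ends p C] True vsC by auto
      have C1ne: "C1 \<noteq> []" using Cs True CA by auto
      have s2: "set (vs ends y C2) \<subseteq> set LC" using split_tl[OF C1ne, of ends p C2] Cs unfolding LC_def by simp
      have b2: "set (butlast (vs ends y C2)) \<subseteq> set (butlast (vs ends p C))" using split_butlast[of ends p C1 C2] Cs by simp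
      have d2: "distinct (vs ends y C2)" using distinct_vs_append[of ends p C1 C2] i(7) Cs by simp
      have "INV v T A11 (A12 @ A2) (D @ C2)"
      proof -
        have e1: "A11 @ A12 @ A2 = A1 @ A2" using A1s by simp
        have wD: "walk ends F d (D @ C2)" using DF i(6) Cs by (simp add: y_def[symmetric])
        have vsD: "vs ends d (D @ C2) = butlast (vs ends d D) @ vs ends y C2" by (simp add: vs_append2 y_def)
        have "wend ends d (D @ C2) = c" using Cs unfolding c_def y_def by simp
        moreover have "distinct (vs ends d (D @ C2))" using vsD blD s2 d2 D(4) unfolding Y_def
          by (auto simp: distinct_butlast)
        moreover have "set (vs ends d (D @ C2)) \<inter> set (vs ends v (A1 @ A2)) = {d}"
        proof -
          have "set (vs ends d (D @ C2)) \<subseteq> set (vs ends d D) \<union> set LC" using vsD s2 in_set_butlastD by fastforce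
          moreover have "d \<in> set (vs ends d (D @ C2))" by simp
          moreover have "d \<in> set XL" using D(1) X_def by simp
          moreover note DL2
          ultimately show ?thesis using vsA D(6,7) pD CA dA nL2 unfolding X_def Y_def y_def by auto
        qed
        moreover have "set (butlast (vs ends d (D @ C2))) \<inter> T = {}"
          using blD b2 i(11) butlast_vs_append[of ends d D C2] unfolding Y_def y_def by auto
        ultimately show ?thesis unfolding INV_def e1 A1s(2)[symmetric] using i Cne wD
          by (auto simp: A1s a_def p_def c_def)
      qed
      then show ?thesis using len by blast
    next
      case False
      then have yT: "y \<in> T" using D(3) nL2 unfolding Y_def y_def by auto
      have "INV v T A11 (A12 @ A2) D"
      proof -
        have e1: "A11 @ A12 @ A2 = A1 @ A2" using A1s by simp
        have "y \<noteq> a" using aL2 nL2 by auto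
        moreover have "set (vs ends d D) \<inter> set (vs ends v (A1 @ A2)) = {d}"
        proof -
          have "d \<in> set XL" using D(1) X_def by simp
          then show ?thesis using vsA D(6,7) pD nL2 DL2 unfolding X_def Y_def y_def by auto
        qed
        moreover have "set (butlast (vs ends d D)) \<inter> T = {}" using blD unfolding Y_def by auto
        ultimately show ?thesis unfolding INV_def e1 A1s(2)[symmetric] using i DF D(4) yT
          by (auto simp: A1s a_def p_def y_def)
      qed
      then show ?thesis using len by blast
    qed
  qed
qed

lemma fan_init:
  assumes vW: "v \<in> W" and TW: "T \<subseteq> W" and vT: "v \<notin> T" and t: "t \<in> T" "t' \<in> T" "t \<noteq> t'"
  shows "\<exists>A1 A2 C. INV v T A1 A2 C"
proof -
  obtain P where P: "walk ends F v P" "wend ends v P = t" "distinct (vs ends v P)"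
    using path_all[OF vW] t TW by blast
  obtain A bs where Ab: "P = A @ bs" "wend ends v A \<in> T" "set (butlast (vs ends v A)) \<inter> T = {}"
    using first_hit0[of ends v P T] P(2) t(1) by blast
  define a where "a = wend ends v A"
  have wA: "walk ends F v A" using P(1) Ab(1) by simp
  have dA: "distinct (vs ends v A)" using distinct_vs_append[of ends v A bs] P(3) Ab(1) by simp
  have Ane: "A \<noteq> []" using Ab(2) vT by auto
  obtain t'' where t'': "t'' \<in> T" "t'' \<noteq> a" using t by blast
  have aW: "a \<in> W" using Ab(2) TW unfolding a_def by auto
  have va: "v \<noteq> a" using Ab(2) vT unfolding a_def by auto
  have h: "v \<in> W - {a}" "t'' \<in> W - {a}" using vW va t'' TW by auto
  define Fa where "Fa = {e\<in>F. \<not> incident ends a e}"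
  obtain ps where ps: "walk ends Fa v ps" "wend ends v ps = t''" "set (vs ends v ps) \<subseteq> W - {a}"
    using path_minus[OF aW h] unfolding Fa_def[symmetric] by blast
  define X where "X = set (butlast (vs ends v A))"
  define Y where "Y = T - {a}"
  have XY: "X \<inter> Y = {}" using Ab(3) unfolding X_def Y_def by auto
  have vX: "v \<in> X" using butlast_vs_ne[OF Ane, of ends v] unfolding X_def by simp
  have tY: "wend ends v ps \<in> Y" using ps(2) t'' unfolding Y_def by auto
  obtain d D where D: "d \<in> X" "walk ends Fa d D" "wend ends d D \<in> Y" "distinct (vs ends d D)"
    "set (vs ends d D) \<subseteq> set (vs ends v ps)" "set (vs ends d D) \<inter> X = {d}" "set (vs ends d D) \<inter> Y = {wend ends d D}"
  proof -
    from seg[OF ps(1) vX tY XY] show ?thesis using that by blast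
  qed
  have "Fa \<subseteq> F" unfolding Fa_def by auto
  then have DF: "walk ends F d D" using walk_mono[OF D(2)] walk_set[OF D(2)] by blast
  have aD: "a \<notin> set (vs ends d D)" using D(5) ps(3) by auto
  have Xeq: "X = set (vs ends v A) - {a}" using set_butlast_dist[OF dA] unfolding X_def a_def by simp
  have dA1: "d \<in> set (vs ends v A)" using D(1) Xeq by blast
  obtain A1 A2 where A12: "A = A1 @ A2" "wend ends v A1 = d" using walk_split[OF dA1] by blast
  have A2ne: "A2 \<noteq> []"
  proof
    assume "A2 = []"
    then have "d = a" using A12 unfolding a_def by simp
    then show False using D(1) Xeq by simp
  qed
  have setA: "set (vs ends v A) = insert a X" using Xeq a_def by auto
  have i1: "set (vs ends d D) \<inter> set (vs ends v A) = {d}" using setA D(6) aD D(1) by auto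
  have i2: "set (butlast (vs ends d D)) \<inter> T = {}"
  proof -
    have "set (vs ends d D) \<inter> T \<subseteq> {wend ends d D}" using D(7) aD unfolding Y_def by auto
    then show ?thesis using set_butlast_dist[OF D(4)] by auto
  qed
  have "INV v T A1 A2 D" unfolding INV_def A12(2) using A12(1) wA dA Ab(2,3) A2ne DF D(3,4) i1 i2
    unfolding Y_def a_def by auto
  then show ?thesis by blast
qed

lemma fan:
  assumes vW: "v \<in> W" and TW: "T \<subseteq> W" and vT: "v \<notin> T" and t: "t \<in> T" "t' \<in> T" "t \<noteq> t'"
  shows "\<exists>P1 P2. walk ends F v P1 \<and> walk ends F v P2 \<and> distinct (vs ends v P1) \<and> distinct (vs ends v P2)
    \<and> wend ends v P1 \<in> T \<and> wend ends v P2 \<in> T \<and> wend ends v P1 \<noteq> wend ends v P2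
    \<and> set (vs ends v P1) \<inter> set (vs ends v P2) = {v}
    \<and> set (butlast (vs ends v P1)) \<inter> T = {} \<and> set (butlast (vs ends v P2)) \<inter> T = {}"
proof -
  have main: "INV v T A1 A2 C \<Longrightarrow> \<exists>A2' C'. INV v T [] A2' C'" for A1 A2 C
  proof (induction "length A1" arbitrary: A1 A2 C rule: less_induct)
    case less
    show ?case
    proof (cases "A1 = []")
      case True then show ?thesis using less.prems by blast
    next
      case False
      from fan_step[OF less.prems False vW TW] obtain A1' A2' C' where
        "INV v T A1' A2' C'" "length A1' < length A1" by blast
      then show ?thesis using less.hyps by blast
    qed
  qed
  obtain A2 C where "INV v T [] A2 C" using main fan_init[OF assms] by blast
  then show ?thesis unfolding INV_def by (intro exI[of _ A2] exI[of _ C]) simp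
qed

end

lemma tl_rev: "tl (rev xs) = rev (butlast xs)"
  by (induction xs) (auto simp: tl_append split: list.split)

lemma arcs:
  assumes q: "walk ends S y q" "wend ends y q = y" "distinct (tl (vs ends y q))"
    and t: "t1 \<in> set (vs ends y q)" "t2 \<in> set (vs ends y q)" "t1 \<noteq> t2"
  shows "\<exists>\<alpha> \<beta>. walk ends S t1 \<alpha> \<and> wend ends t1 \<alpha> = t2 \<and> walk ends S t1 \<beta> \<and> wend ends t1 \<beta> = t2
    \<and> distinct (vs ends t1 \<alpha>) \<and> distinct (vs ends t1 \<beta>) \<and> set (vs ends t1 \<alpha>) \<subseteq> set (vs ends y q)
    \<and> set (vs ends t1 \<beta>) \<subseteq> set (vs ends y q) \<and> sgn \<sigma> \<alpha> * sgn \<sigma> \<beta> = sgn \<sigma> q"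
proof -
  obtain A B where AB: "q = A @ B" "wend ends y A = t1" using walk_split[OF t(1)] by blast
  define q' where "q' = B @ A"
  have wq': "walk ends S t1 q'" "wend ends t1 q' = t1" using q(1,2) AB unfolding q'_def by auto
  have tlq': "tl (vs ends t1 q') = tl (vs ends t1 B) @ tl (vs ends y A)"
    unfolding q'_def using q(2) AB by (simp add: tl_vs_append)
  have tlq: "tl (vs ends y q) = tl (vs ends y A) @ tl (vs ends t1 B)" using AB by (simp add: tl_vs_append)
  have dq': "distinct (tl (vs ends t1 q'))" using q(3) tlq tlq' by auto
  have sq': "set (vs ends t1 q') = set (vs ends y q)" using AB q(2) unfolding q'_def by (auto simp: set_vs_append)
  have t2q': "t2 \<in> set (vs ends t1 q')" using t(2) sq' by simp
  obtain \<alpha> \<gamma> where ag: "q' = \<alpha> @ \<gamma>" "wend ends t1 \<alpha> = t2" using walk_split[OF t2q'] by blast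
  have ane: "\<alpha> \<noteq> []" using ag t(3) by auto
  have gne: "\<gamma> \<noteq> []" using ag wq'(2) t(3) by auto
  have wa: "walk ends S t1 \<alpha>" "walk ends S t2 \<gamma>" "wend ends t2 \<gamma> = t1" using wq' ag by auto
  have tl2: "tl (vs ends t1 q') = tl (vs ends t1 \<alpha>) @ tl (vs ends t2 \<gamma>)" using ag by (simp add: tl_vs_append)
  have t1g: "t1 \<in> set (tl (vs ends t2 \<gamma>))" using last_tl_vs[OF gne, of ends t2] tl_vs_ne[OF gne, of ends t2] wa(3)
    by (metis last_in_set)
  have t2a: "t2 \<in> set (tl (vs ends t1 \<alpha>))" using last_tl_vs[OF ane, of ends t1] tl_vs_ne[OF ane, of ends t1] ag(2)
    by (metis last_in_set)
  have dA: "distinct (vs ends t1 \<alpha>)"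
    using dq' tl2 t1g vs_cons_tl[of ends t1 \<alpha>] by (metis distinct.simps(2) distinct_append disjoint_iff)
  have dG: "distinct (vs ends t2 \<gamma>)"
    using dq' tl2 t2a vs_cons_tl[of ends t2 \<gamma>] by (metis distinct.simps(2) distinct_append disjoint_iff)
  note rg = walk_rev[OF wa(2), unfolded wa(3)]
  have s1: "set (vs ends t1 \<alpha>) \<subseteq> set (vs ends y q)" "set (vs ends t2 \<gamma>) \<subseteq> set (vs ends y q)"
    using sq' ag set_vs_append[of ends t1 \<alpha> \<gamma>] by auto
  have "sgn \<sigma> (B @ A) = sgn \<sigma> (\<alpha> @ \<gamma>)" using ag unfolding q'_def by simp
  then have "sgn \<sigma> \<alpha> * sgn \<sigma> (rev \<gamma>) = sgn \<sigma> q" using AB by (simp add: mult.commute)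
  moreover have "distinct (vs ends t1 (rev \<gamma>))" using rg dG by simp
  moreover have "set (vs ends t1 (rev \<gamma>)) \<subseteq> set (vs ends y q)" using rg s1 by simp
  ultimately show ?thesis using wa ag(2) rg dA s1
    by (intro exI[of _ \<alpha>] exI[of _ "rev \<gamma>"]) simp
qed

context sg begin

lemma cycv:
  assumes vW: "v \<in> W" and g: "g1 \<in> F" "g2 \<in> F" "incident ends v g1" "incident ends v g2" "g1 \<noteq> g2"
    and X: "walk ends {e\<in>F. \<not> incident ends v e} (other_end ends v g1) X"
      "wend ends (other_end ends v g1) X = other_end ends v g2" "distinct (vs ends (other_end ends v g1) X)"
  shows "circle ends W F (insert v (set (vs ends (other_end ends v g1) X))) (insert g1 (insert g2 (set X)))
    \<and> (\<Prod>e\<in>insert g1 (insert g2 (set X)). \<sigma> e) = \<sigma> g1 * \<sigma> g2 * sgn \<sigma> X"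
proof -
  define u1 where "u1 = other_end ends v g1"
  define u2 where "u2 = other_end ends v g2"
  define c where "c = g1 # X @ [g2]"
  have XF: "set X \<subseteq> F" using walk_set[OF X(1)] by auto
  have Xnv: "\<forall>e\<in>set X. \<not> incident ends v e" using walk_set[OF X(1)] by auto
  have u1v: "u1 \<noteq> v" using g(1,3) loopless unfolding u1_def by (auto simp: incident_def other_end_def)
  have vX: "v \<notin> set (vs ends u1 X)" using walk_avoid[OF X(1)[folded u1_def] u1v] by auto
  have wX: "walk ends F u1 X" using walk_mono[OF X(1) XF] unfolding u1_def .
  have i2: "incident ends u2 g2" "other_end ends u2 g2 = v" using incident_other[OF g(4)] other_end_other[OF g(4)]
    unfolding u2_def by auto
  have wc: "walk ends F v c" "wend ends v c = v" using wX g X(2) i2 unfolding c_def u1_def u2_def by auto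
  have vsc: "vs ends v c = v # vs ends u1 X @ [v]" unfolding c_def u1_def
    using X(2) i2 unfolding u2_def by (simp add: vs_append)
  have dtl: "distinct (tl (vs ends v c))" using vsc vX X(3) unfolding u1_def by simp
  have g12X: "g1 \<notin> set X" "g2 \<notin> set X" using Xnv g by auto
  have dc: "distinct c" using path_distinct_edges[OF X(1,3)] g12X g(5) unfolding c_def by auto
  from cyc[OF wc _ dtl dc vW] have "circle ends W F (set (vs ends v c)) (set c) \<and> (\<Prod>e\<in>set c. \<sigma> e) = sgn \<sigma> c"
    unfolding c_def by simp
  moreover have "set (vs ends v c) = insert v (set (vs ends u1 X))" using vsc by auto
  moreover have "set c = insert g1 (insert g2 (set X))" unfolding c_def by auto
  moreover have "sgn \<sigma> c = \<sigma> g1 * \<sigma> g2 * sgn \<sigma> X" unfolding c_def by simp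
  ultimately show ?thesis unfolding u1_def by simp
qed

lemma negpath:
  assumes vW: "v \<in> W" and H: "\<forall>C D. circle ends W F C D \<and> v \<in> C \<longrightarrow> (\<Prod>e\<in>D. \<sigma> e) = -1"
    and g: "g1 \<in> F" "g2 \<in> F" "incident ends v g1" "incident ends v g2" "g1 \<noteq> g2"
    and X: "walk ends {e\<in>F. \<not> incident ends v e} (other_end ends v g1) X"
      "wend ends (other_end ends v g1) X = other_end ends v g2" "distinct (vs ends (other_end ends v g1) X)"
  shows "\<sigma> g1 * \<sigma> g2 * sgn \<sigma> X = -1"
proof -
  note c = cycv[OF vW g X]
  have "(\<Prod>e\<in>insert g1 (insert g2 (set X)). \<sigma> e) = -1" using H c by blast
  then show ?thesis using c by simp
qed

lemma sq1: "e \<in> F \<Longrightarrow> \<sigma> e * \<sigma> e = 1"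
  using sig by auto

lemma other_W: "e \<in> F \<Longrightarrow> incident ends v e \<Longrightarrow> other_end ends v e \<in> W - {v}"
  using endsW loopless by (auto simp: incident_def other_end_def)

lemma theta:
  assumes vW: "v \<in> W" and H: "\<forall>C D. circle ends W F C D \<and> v \<in> C \<longrightarrow> (\<Prod>e\<in>D. \<sigma> e) = -1"
    and e: "e1 \<in> F" "e2 \<in> F" "e3 \<in> F" "incident ends v e1" "incident ends v e2" "incident ends v e3"
      "e1 \<noteq> e2" "e1 \<noteq> e3" "e2 \<noteq> e3"
  shows False
proof -
  define Fv where "Fv = {e\<in>F. \<not> incident ends v e}"
  define u1 where "u1 = other_end ends v e1"
  define u2 where "u2 = other_end ends v e2"
  define u3 where "u3 = other_end ends v e3"
  have uW: "u1 \<in> W - {v}" "u2 \<in> W - {v}" "u3 \<in> W - {v}" using other_W e unfolding u1_def u2_def u3_def by auto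
  obtain P where P: "walk ends Fv u1 P" "wend ends u1 P = u2" "distinct (vs ends u1 P)"
    using path_minus[OF vW uW(1,2)] unfolding Fv_def[symmetric] by blast
  obtain R0 where R0: "walk ends Fv u3 R0" "wend ends u3 R0 = u1" "distinct (vs ends u3 R0)"
    using path_minus[OF vW uW(3,1)] unfolding Fv_def[symmetric] by blast
  have "wend ends u3 R0 \<in> set (vs ends u1 P)" using R0(2) by simp
  from first_hit0[OF this] obtain R1 bs where R1: "R0 = R1 @ bs" "wend ends u3 R1 \<in> set (vs ends u1 P)"
    "set (butlast (vs ends u3 R1)) \<inter> set (vs ends u1 P) = {}" by blast
  define w where "w = wend ends u3 R1"
  have wR1: "walk ends Fv u3 R1" using R0(1) R1(1) by simp
  have dR1: "distinct (vs ends u3 R1)" using distinct_vs_append[of ends u3 R1 bs] R0(3) R1(1) by simp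
  have wP: "w \<in> set (vs ends u1 P)" using R1(2) unfolding w_def .
  obtain P1 P2 where P12: "P = P1 @ P2" "wend ends u1 P1 = w" using walk_split[OF wP] by blast
  have wP1: "walk ends Fv u1 P1" "walk ends Fv w P2" "wend ends w P2 = u2" using P(1,2) P12 by auto
  have dP12: "distinct (vs ends u1 P1)" "distinct (vs ends w P2)"
    using distinct_vs_append[of ends u1 P1 P2] P(3) P12 by auto
  have sP12: "set (vs ends u1 P1) \<subseteq> set (vs ends u1 P)" "set (vs ends w P2) \<subseteq> set (vs ends u1 P)"
    using P12 set_vs_append[of ends u1 P1 P2] by auto
  note rR1 = walk_rev[OF wR1, folded w_def]
  note rP2 = walk_rev[OF wP1(2), unfolded wP1(3)]
  have blR: "distinct (butlast (vs ends u3 R1))" using dR1 by (simp add: distinct_butlast)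
  define X13 where "X13 = P1 @ rev R1"
  have w13: "walk ends Fv u1 X13" "wend ends u1 X13 = u3" using wP1 rR1 P12 unfolding X13_def by auto
  have vs13: "vs ends u1 X13 = vs ends u1 P1 @ rev (butlast (vs ends u3 R1))"
    unfolding X13_def using rR1 P12 by (simp add: vs_append tl_rev)
  have d13: "distinct (vs ends u1 X13)" using vs13 dP12 blR R1(3) sP12 by auto
  define X23 where "X23 = rev P2 @ rev R1"
  have w23: "walk ends Fv u2 X23" "wend ends u2 X23 = u3" using rP2 rR1 unfolding X23_def by auto
  have vs23: "vs ends u2 X23 = rev (vs ends w P2) @ rev (butlast (vs ends u3 R1))"
    unfolding X23_def using rR1 rP2 by (simp add: vs_append tl_rev)
  have d23: "distinct (vs ends u2 X23)" using vs23 dP12 blR R1(3) sP12 by auto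
  have n12: "\<sigma> e1 * \<sigma> e2 * sgn \<sigma> P = -1"
    using negpath[OF vW H e(1,2,4,5,7)] P unfolding Fv_def u1_def u2_def by blast
  have n13: "\<sigma> e1 * \<sigma> e3 * sgn \<sigma> X13 = -1"
    using negpath[OF vW H e(1,3,4,6,8)] w13 d13 unfolding Fv_def u1_def u3_def by blast
  have n23: "\<sigma> e2 * \<sigma> e3 * sgn \<sigma> X23 = -1"
    using negpath[OF vW H e(2,3,5,6,9)] w23 d23 unfolding Fv_def u2_def u3_def by blast
  have FvF: "Fv \<subseteq> F" unfolding Fv_def by auto
  have sq: "sgn \<sigma> P1 * sgn \<sigma> P1 = 1" "sgn \<sigma> P2 * sgn \<sigma> P2 = 1" "sgn \<sigma> R1 * sgn \<sigma> R1 = 1"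
    using sgn_sq walk_set[OF wP1(1)] walk_set[OF wP1(2)] walk_set[OF wR1] FvF by blast+
  have sq2: "\<sigma> e1 * \<sigma> e1 = 1" "\<sigma> e2 * \<sigma> e2 = 1" "\<sigma> e3 * \<sigma> e3 = 1" using sq1 e by auto
  let ?a = "\<sigma> e1" and ?b = "\<sigma> e2" and ?c = "\<sigma> e3" and ?p = "sgn \<sigma> P1" and ?q = "sgn \<sigma> P2" and ?r = "sgn \<sigma> R1"
  have "(-1::int) = (?a * ?b * (?p * ?q)) * (?a * ?c * (?p * ?r)) * (?b * ?c * (?q * ?r))"
    using n12 n13 n23 P12 unfolding X13_def X23_def by simp
  also have "\<dots> = (?a * ?a) * (?b * ?b) * (?c * ?c) * (?p * ?p) * (?q * ?q) * (?r * ?r)" by (simp add: algebra_simps)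
  also have "\<dots> = 1" using sq sq2 by simp
  finally show False by simp
qed

lemma walk_Fv: "walk ends F x R \<Longrightarrow> v \<notin> set (vs ends x R) \<Longrightarrow> walk ends {e\<in>F. \<not> incident ends v e} x R"
proof -
  assume w: "walk ends F x R" and v: "v \<notin> set (vs ends x R)"
  have "set R \<subseteq> {e\<in>F. \<not> incident ends v e}"
  proof
    fix e assume "e \<in> set R"
    with walk_edge_ends[OF w this] walk_set[OF w] v show "e \<in> {e\<in>F. \<not> incident ends v e}"
      by (auto simp: incident_def)
  qed
  then show ?thesis using walk_mono[OF w] by blast
qed

lemma fan_split:
  assumes "walk ends F v P" "distinct (vs ends v P)" "P \<noteq> []"
  shows "\<exists>g R. P = g # R \<and> g \<in> F \<and> incident ends v g
     \<and> walk ends {e\<in>F. \<not> incident ends v e} (other_end ends v g) R \<and> distinct (vs ends (other_end ends v g) R)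
     \<and> vs ends v P = v # vs ends (other_end ends v g) R"
proof -
  obtain g R where P: "P = g # R" using assms(3) by (cases P) auto
  have "v \<notin> set (vs ends (other_end ends v g) R)" "distinct (vs ends (other_end ends v g) R)" using assms(2) P by auto
  then show ?thesis using assms(1) P walk_Fv[of "other_end ends v g" R v] by auto
qed

lemma no_neg_closed:
  assumes vW: "v \<in> W" and H: "\<forall>C D. circle ends W F C D \<and> v \<in> C \<longrightarrow> (\<Prod>e\<in>D. \<sigma> e) = -1"
    and Sv: "{e\<in>F. incident ends v e} = {e1, e2}" "e1 \<noteq> e2"
    and c: "walk ends {e\<in>F. \<not> incident ends v e} x c" "wend ends x c = x" "x \<in> W - {v}"
  shows "sgn \<sigma> c = 1"
proof (rule ccontr)
  define Fv where "Fv = {e\<in>F. \<not> incident ends v e}"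
  have FvF: "Fv \<subseteq> F" unfolding Fv_def by auto
  assume "sgn \<sigma> c \<noteq> 1"
  moreover have "sgn \<sigma> c \<in> {1,-1}" using sgn_pm[of c \<sigma>] walk_set[OF c(1)] sig by auto
  ultimately have cn: "sgn \<sigma> c = -1" by auto
  have llv: "\<forall>e\<in>Fv. fst (ends e) \<noteq> snd (ends e)" "\<forall>e\<in>Fv. \<sigma> e \<in> {1,-1}" using loopless sig FvF by auto
  obtain y q where q: "walk ends Fv y q" "wend ends y q = y" "q \<noteq> []" "distinct (tl (vs ends y q))" "distinct q"
     "sgn \<sigma> q = -1" "set (vs ends y q) \<subseteq> set (vs ends x c)"
    using neg_circ[OF c(1)[folded Fv_def] c(2) cn llv] by blast
  define T where "T = set (vs ends y q)"
  have xcW: "set (vs ends x c) \<subseteq> W" using vs_W[OF c(1)] c(3) by auto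
  have vxc: "v \<notin> set (vs ends x c)" using walk_avoid[OF c(1)] c(3) by auto
  have TW: "T \<subseteq> W" "v \<notin> T" using q(7) xcW vxc unfolding T_def by auto
  obtain e q' where eq: "q = e # q'" using q(3) by (cases q) auto
  have yT: "y \<in> T" "other_end ends y e \<in> T" "y \<noteq> other_end ends y e"
    using eq q(1) loopless FvF unfolding T_def by (auto simp: incident_def other_end_def)
  obtain P1 P2 where P: "walk ends F v P1" "walk ends F v P2" "distinct (vs ends v P1)" "distinct (vs ends v P2)"
    "wend ends v P1 \<in> T" "wend ends v P2 \<in> T" "wend ends v P1 \<noteq> wend ends v P2"
    "set (vs ends v P1) \<inter> set (vs ends v P2) = {v}"
    "set (butlast (vs ends v P1)) \<inter> T = {}" "set (butlast (vs ends v P2)) \<inter> T = {}"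
    using fan[OF vW TW(1,2) yT] by blast
  have Pne: "P1 \<noteq> []" "P2 \<noteq> []" using P(5,6) TW(2) by auto
  obtain g1 R1 where G1: "P1 = g1 # R1" "g1 \<in> F" "incident ends v g1"
     "walk ends Fv (other_end ends v g1) R1" "distinct (vs ends (other_end ends v g1) R1)"
     "vs ends v P1 = v # vs ends (other_end ends v g1) R1"
    using fan_split[OF P(1,3) Pne(1)] unfolding Fv_def by blast
  obtain g2 R2 where G2: "P2 = g2 # R2" "g2 \<in> F" "incident ends v g2"
     "walk ends Fv (other_end ends v g2) R2" "distinct (vs ends (other_end ends v g2) R2)"
     "vs ends v P2 = v # vs ends (other_end ends v g2) R2"
    using fan_split[OF P(2,4) Pne(2)] unfolding Fv_def by blast
  define u1 where "u1 = other_end ends v g1"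
  define u2 where "u2 = other_end ends v g2"
  define t1 where "t1 = wend ends u1 R1"
  define t2 where "t2 = wend ends u2 R2"
  have t12: "t1 \<in> T" "t2 \<in> T" "t1 \<noteq> t2" using P(5,6,7) G1(1) G2(1) unfolding t1_def t2_def u1_def u2_def by auto
  have vR: "v \<notin> set (vs ends u1 R1)" "v \<notin> set (vs ends u2 R2)" using P(3,4) G1(6) G2(6) unfolding u1_def u2_def by auto
  have R12: "set (vs ends u1 R1) \<inter> set (vs ends u2 R2) = {}" using P(8) G1(6) G2(6) vR unfolding u1_def u2_def by auto
  have g12: "g1 \<noteq> g2"
  proof
    assume "g1 = g2"
    then have "u1 = u2" unfolding u1_def u2_def by simp
    moreover have "u1 \<in> set (vs ends u1 R1)" "u2 \<in> set (vs ends u2 R2)" by simp_all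
    ultimately show False using R12 by blast
  qed
  have bl1: "set (butlast (vs ends u1 R1)) \<inter> T = {}" using P(9) G1(6) unfolding u1_def
    by (metis butlast.simps(2) vs_ne Int_insert_left_if0 list.simps(15) TW(2))
  have bl2: "set (butlast (vs ends u2 R2)) \<inter> T = {}" using P(10) G2(6) unfolding u2_def
    by (metis butlast.simps(2) vs_ne Int_insert_left_if0 list.simps(15) TW(2))
  have s1: "set (vs ends u1 R1) = insert t1 (set (butlast (vs ends u1 R1)))" unfolding t1_def
    by (subst vs_snoc_last) simp
  have s2: "set (vs ends u2 R2) = insert t2 (set (butlast (vs ends u2 R2)))" unfolding t2_def
    by (subst vs_snoc_last) simp
  have dR2: "distinct (butlast (vs ends u2 R2))" using G2(5) unfolding u2_def by (simp add: distinct_butlast)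
  note rR2 = walk_rev[OF G2(4)[folded u2_def], folded t2_def]
  obtain \<alpha> \<beta> where ab: "walk ends Fv t1 \<alpha>" "wend ends t1 \<alpha> = t2" "walk ends Fv t1 \<beta>" "wend ends t1 \<beta> = t2"
    "distinct (vs ends t1 \<alpha>)" "distinct (vs ends t1 \<beta>)" "set (vs ends t1 \<alpha>) \<subseteq> T"
    "set (vs ends t1 \<beta>) \<subseteq> T" "sgn \<sigma> \<alpha> * sgn \<sigma> \<beta> = sgn \<sigma> q"
    using arcs[OF q(1,2,4) t12[unfolded T_def]] unfolding T_def by blast
  have key: "\<sigma> g1 * \<sigma> g2 * (sgn \<sigma> R1 * sgn \<sigma> \<gamma> * sgn \<sigma> R2) = -1"
    if g: "walk ends Fv t1 \<gamma>" "wend ends t1 \<gamma> = t2" "distinct (vs ends t1 \<gamma>)" "set (vs ends t1 \<gamma>) \<subseteq> T" for \<gamma>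
  proof -
    define X where "X = R1 @ \<gamma> @ rev R2"
    have wX: "walk ends Fv u1 X" "wend ends u1 X = u2" using G1(4) g(1,2) rR2 unfolding X_def u1_def t1_def
      by auto
    have vsX: "vs ends u1 X = vs ends u1 R1 @ tl (vs ends t1 \<gamma>) @ rev (butlast (vs ends u2 R2))"
      unfolding X_def using g(2) rR2 by (simp add: vs_append tl_rev t1_def[symmetric] tl_vs_append)
    obtain l where l: "vs ends t1 \<gamma> = t1 # l" using vs_cons_tl[of ends t1 \<gamma>] by blast
    have dg: "distinct l" "t1 \<notin> set l" using g(3) l by auto
    have sg: "set l \<subseteq> T" using g(4) l by auto
    have tll: "tl (vs ends t1 \<gamma>) = l" using l by simp
    have A: "distinct (vs ends u1 R1)" using G1(5) unfolding u1_def .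
    have B: "set (vs ends u1 R1) \<inter> set l = {}" unfolding s1 using bl1 sg dg(2) by auto
    have C: "set (vs ends u1 R1) \<inter> set (butlast (vs ends u2 R2)) = {}" using R12 by (auto dest: in_set_butlastD)
    have D: "set l \<inter> set (butlast (vs ends u2 R2)) = {}" using sg bl2 by auto
    have dX: "distinct (vs ends u1 X)" unfolding vsX tll using A B C D dg(1) dR2 by auto
    have "\<sigma> g1 * \<sigma> g2 * sgn \<sigma> X = -1"
      using negpath[OF vW H G1(2) G2(2) G1(3) G2(3) g12] wX dX unfolding Fv_def u1_def u2_def by blast
    then show ?thesis unfolding X_def by (simp add: mult.assoc)
  qed
  have ka: "\<sigma> g1 * \<sigma> g2 * (sgn \<sigma> R1 * sgn \<sigma> \<alpha> * sgn \<sigma> R2) = -1" using key ab by blast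
  have kb: "\<sigma> g1 * \<sigma> g2 * (sgn \<sigma> R1 * sgn \<sigma> \<beta> * sgn \<sigma> R2) = -1" using key ab by blast
  have sq: "sgn \<sigma> R1 * sgn \<sigma> R1 = 1" "sgn \<sigma> R2 * sgn \<sigma> R2 = 1"
    using sgn_sq walk_set[OF G1(4)] walk_set[OF G2(4)] FvF by blast+
  have sq2: "\<sigma> g1 * \<sigma> g1 = 1" "\<sigma> g2 * \<sigma> g2 = 1" using sq1 G1(2) G2(2) by auto
  let ?a = "\<sigma> g1" and ?b = "\<sigma> g2" and ?r = "sgn \<sigma> R1" and ?s = "sgn \<sigma> R2" and ?x = "sgn \<sigma> \<alpha>" and ?y = "sgn \<sigma> \<beta>"
  have "(1::int) = (?a * ?b * (?r * ?x * ?s)) * (?a * ?b * (?r * ?y * ?s))" using ka kb by simp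
  also have "\<dots> = (?a * ?a) * (?b * ?b) * (?r * ?r) * (?s * ?s) * (?x * ?y)" by (simp add: algebra_simps)
  also have "\<dots> = -1" using sq sq2 ab(9) q(6) by simp
  finally show False by simp
qed

end

lemma prod_ends:
  assumes "finite D" "finite C" "\<forall>e\<in>D. fst (ends e) \<in> C \<and> snd (ends e) \<in> C"
  shows "(\<Prod>e\<in>D. (f (fst (ends e)) * f (snd (ends e)) :: int)) = (\<Prod>y\<in>C. f y ^ deg2 ends D y)"
proof -
  have g1: "(\<Prod>e\<in>D. f (fst (ends e))) = (\<Prod>y\<in>C. f y ^ card {e\<in>D. fst (ends e) = y})"
  proof -
    have img: "(\<lambda>e. fst (ends e)) ` D \<subseteq> C" using assms(3) by auto
    have "(\<Prod>y\<in>C. \<Prod>e\<in>{x. x \<in> D \<and> fst (ends x) = y}. f (fst (ends e))) = (\<Prod>e\<in>D. f (fst (ends e)))"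
      by (rule prod.group[OF assms(1,2) img])
    moreover have "(\<Prod>y\<in>C. \<Prod>e\<in>{x. x \<in> D \<and> fst (ends x) = y}. f (fst (ends e))) = (\<Prod>y\<in>C. f y ^ card {e\<in>D. fst (ends e) = y})"
      by (intro prod.cong refl) simp
    ultimately show ?thesis by simp
  qed
  have g2: "(\<Prod>e\<in>D. f (snd (ends e))) = (\<Prod>y\<in>C. f y ^ card {e\<in>D. snd (ends e) = y})"
  proof -
    have img: "(\<lambda>e. snd (ends e)) ` D \<subseteq> C" using assms(3) by auto
    have "(\<Prod>y\<in>C. \<Prod>e\<in>{x. x \<in> D \<and> snd (ends x) = y}. f (snd (ends e))) = (\<Prod>e\<in>D. f (snd (ends e)))"
      by (rule prod.group[OF assms(1,2) img])
    moreover have "(\<Prod>y\<in>C. \<Prod>e\<in>{x. x \<in> D \<and> snd (ends x) = y}. f (snd (ends e))) = (\<Prod>y\<in>C. f y ^ card {e\<in>D. snd (ends e) = y})"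
      by (intro prod.cong refl) simp
    ultimately show ?thesis by simp
  qed
  show ?thesis unfolding prod.distrib g1 g2 deg2_def
    by (simp add: prod.distrib[symmetric] power_add)
qed

lemma deg2_incident:
  assumes "finite D" "\<forall>e\<in>D. fst (ends e) \<noteq> snd (ends e)"
  shows "deg2 ends D y = card {e\<in>D. incident ends y e}"
proof -
  have "{e\<in>D. incident ends y e} = {e\<in>D. fst (ends e) = y} \<union> {e\<in>D. snd (ends e) = y}"
    by (auto simp: incident_def)
  moreover have "{e\<in>D. fst (ends e) = y} \<inter> {e\<in>D. snd (ends e) = y} = {}" using assms(2) by auto
  ultimately show ?thesis unfolding deg2_def using assms(1) by (simp add: card_Un_disjoint)
qed

context sg begin

lemma balancing:
  assumes vW: "v \<in> W" and H: "\<forall>C D. circle ends W F C D \<and> v \<in> C \<longrightarrow> (\<Prod>e\<in>D. \<sigma> e) = -1"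
    and Sv: "{e\<in>F. incident ends v e} = {e1, e2}" "e1 \<noteq> e2"
  shows "balancing_edge (W - {v}) (down_E F e1 e2) (down_ends ends v e1 e2) (down_sigma \<sigma> e1 e2) None"
proof -
  define Fv where "Fv = {e\<in>F. \<not> incident ends v e}"
  have FvF: "Fv \<subseteq> F" unfolding Fv_def by auto
  have e: "e1 \<in> F" "e2 \<in> F" "incident ends v e1" "incident ends v e2" using Sv by blast+
  define u1 where "u1 = other_end ends v e1"
  define u2 where "u2 = other_end ends v e2"
  have uW: "u1 \<in> W - {v}" "u2 \<in> W - {v}" using other_W e unfolding u1_def u2_def by auto
  define \<zeta> where "\<zeta> x = (if x \<in> W - {v} then sgn \<sigma> (SOME es. walk ends Fv u1 es \<and> wend ends u1 es = x) else 1)" for x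
  have ex: "\<exists>es. walk ends Fv u1 es \<and> wend ends u1 es = x" if "x \<in> W - {v}" for x
    using path_minus[OF vW uW(1) that] unfolding Fv_def[symmetric] by blast
  have pm: "sgn \<sigma> es \<in> {1,-1}" if "walk ends Fv u es" for u es
    using sgn_pm[of es \<sigma>] walk_set[OF that] FvF sig by blast
  have K: "\<zeta> x = sgn \<sigma> es" if x: "x \<in> W - {v}" "walk ends Fv u1 es" "wend ends u1 es = x" for x es
  proof -
    define es0 where "es0 = (SOME es. walk ends Fv u1 es \<and> wend ends u1 es = x)"
    have e0: "walk ends Fv u1 es0" "wend ends u1 es0 = x" using someI_ex[OF ex[OF x(1)]] unfolding es0_def by auto
    note rr = walk_rev[OF x(2), unfolded x(3)]
    have "walk ends Fv u1 (es0 @ rev es)" "wend ends u1 (es0 @ rev es) = u1" using e0 rr by auto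
    then have "sgn \<sigma> (es0 @ rev es) = 1"
      using no_neg_closed[OF vW H Sv, of u1 "es0 @ rev es"] uW(1) unfolding Fv_def by blast
    then have "sgn \<sigma> es0 * sgn \<sigma> es = 1" by simp
    moreover have "sgn \<sigma> es0 \<in> {1,-1}" "sgn \<sigma> es \<in> {1,-1}" using pm e0(1) x(2) by blast+
    ultimately have "sgn \<sigma> es0 = sgn \<sigma> es" by auto
    then show ?thesis using x(1) unfolding \<zeta>_def es0_def by simp
  qed
  have zpm: "\<zeta> x \<in> {1,-1}" for x
  proof (cases "x \<in> W - {v}")
    case True
    then obtain es where "walk ends Fv u1 es" "wend ends u1 es = x" using ex by blast
    then show ?thesis using K[OF True] pm by metis
  qed (auto simp: \<zeta>_def)
  have z1: "\<zeta> u1 = 1" using K[OF uW(1), of "[]"] by simp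
  obtain X where X: "walk ends Fv u1 X" "wend ends u1 X = u2" "distinct (vs ends u1 X)"
    using path_minus[OF vW uW(1,2)] unfolding Fv_def[symmetric] by blast
  have z2: "\<zeta> u2 = sgn \<sigma> X" using K[OF uW(2) X(1,2)] .
  have nX: "\<sigma> e1 * \<sigma> e2 * sgn \<sigma> X = -1"
    using negpath[OF vW H e(1,2,3,4) Sv(2)] X unfolding Fv_def u1_def u2_def by blast
  have sw: "switch_sign (down_ends ends v e1 e2) (down_sigma \<sigma> e1 e2) \<zeta> f = (if f = None then -1 else 1)"
    if f: "f \<in> down_E F e1 e2" for f
  proof (cases f)
    case None
    then show ?thesis using z1 z2 nX unfolding switch_sign_def down_ends_def down_sigma_def u1_def[symmetric] u2_def[symmetric]
      by (simp add: mult.commute mult.left_commute)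
  next
    case (Some e)
    then have eF: "e \<in> F" "e \<noteq> e1" "e \<noteq> e2" using f unfolding down_E_def by auto
    then have env: "\<not> incident ends v e" using Sv by auto
    define a where "a = fst (ends e)"
    define b where "b = snd (ends e)"
    have abW: "a \<in> W - {v}" "b \<in> W - {v}" using endsW eF env unfolding a_def b_def incident_def by auto
    obtain Pa where Pa: "walk ends Fv u1 Pa" "wend ends u1 Pa = a" using ex[OF abW(1)] by blast
    have eFv: "e \<in> Fv" using eF env unfolding Fv_def by simp
    have "incident ends a e" "other_end ends a e = b" using loopless eF unfolding a_def b_def
      by (auto simp: incident_def other_end_def)
    then have "walk ends Fv u1 (Pa @ [e])" "wend ends u1 (Pa @ [e]) = b" using Pa eFv by auto
    then have "\<zeta> b = sgn \<sigma> (Pa @ [e])" using K[OF abW(2)] by blast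
    then have "\<zeta> b = sgn \<sigma> Pa * \<sigma> e" by simp
    moreover have "\<zeta> a = sgn \<sigma> Pa" using K[OF abW(1) Pa] .
    moreover have "sgn \<sigma> Pa * sgn \<sigma> Pa = 1" using sgn_sq walk_set[OF Pa(1)] FvF by blast
    moreover have "\<sigma> e * \<sigma> e = 1" using sq1 eF by blast
    ultimately have "\<zeta> a * \<sigma> e * \<zeta> b = 1"
      by (metis mult.commute mult.left_commute mult_1_right)
    then show ?thesis using Some unfolding switch_sign_def down_ends_def down_sigma_def a_def b_def by simp
  qed
  have "None \<in> down_E F e1 e2" unfolding down_E_def by simp
  then show ?thesis unfolding balancing_edge_def using zpm sw by blast
qed

lemma back_dir:
  assumes Sv: "{e\<in>F. incident ends v e} = {e1, e2}" "e1 \<noteq> e2"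
    and bal: "balancing_edge (W - {v}) (down_E F e1 e2) (down_ends ends v e1 e2) (down_sigma \<sigma> e1 e2) None"
    and circ: "circle ends W F C D" and vC: "v \<in> C"
  shows "(\<Prod>e\<in>D. \<sigma> e) = -1"
proof -
  obtain \<zeta> where z: "\<forall>x. \<zeta> x \<in> {1,-1}"
    "\<forall>f\<in>down_E F e1 e2. switch_sign (down_ends ends v e1 e2) (down_sigma \<sigma> e1 e2) \<zeta> f = (if f = None then -1 else 1)"
    using bal unfolding balancing_edge_def by blast
  have e: "e1 \<in> F" "e2 \<in> F" "incident ends v e1" "incident ends v e2" using Sv by blast+
  define u1 where "u1 = other_end ends v e1"
  define u2 where "u2 = other_end ends v e2"
  have uv: "u1 \<noteq> v" "u2 \<noteq> v" using other_W e unfolding u1_def u2_def by auto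
  have zN: "\<zeta> u1 * (\<sigma> e1 * \<sigma> e2) * \<zeta> u2 = -1"
    using z(2)[rule_format, of None] unfolding down_E_def switch_sign_def down_ends_def down_sigma_def u1_def u2_def by simp
  have zS: "\<zeta> (fst (ends e)) * \<sigma> e * \<zeta> (snd (ends e)) = 1" if "e \<in> F" "e \<noteq> e1" "e \<noteq> e2" for e
    using z(2)[rule_format, of "Some e"] that unfolding down_E_def switch_sign_def down_ends_def down_sigma_def by simp
  have zsq: "\<zeta> x * \<zeta> x = 1" for x using z(1) by (cases "\<zeta> x = 1") auto
  from circ have sub: "C \<subseteq> W" "D \<subseteq> F" "\<forall>e\<in>D. fst (ends e) \<in> C \<and> snd (ends e) \<in> C"
    and deg: "\<forall>y\<in>C. deg2 ends D y = 2" unfolding circle_def subgraph_def by auto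
  have finD: "finite D" "finite C" using sub finF finW finite_subset by blast+
  have llD: "\<forall>e\<in>D. fst (ends e) \<noteq> snd (ends e)" using loopless sub by auto
  have "card {e\<in>D. incident ends v e} = 2" using deg vC deg2_incident[OF finD(1) llD] by simp
  moreover have "{e\<in>D. incident ends v e} \<subseteq> {e1, e2}" using Sv sub by auto
  ultimately have Dv: "{e\<in>D. incident ends v e} = {e1, e2}"
    using card_subset_eq[of "{e1, e2}" "{e\<in>D. incident ends v e}"] Sv(2) by simp
  then have e12D: "e1 \<in> D" "e2 \<in> D" by auto
  define z' where "z' = \<zeta>(v := 1)"
  have z'sq: "z' y ^ 2 = 1" for y unfolding z'_def using zsq by (simp add: power2_eq_square)
  have P1: "(\<Prod>e\<in>D. z' (fst (ends e)) * z' (snd (ends e))) = 1"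
    using prod_ends[OF finD sub(3), of z'] deg z'sq by (simp add: prod.neutral)
  define D0 where "D0 = D - {e1, e2}"
  have DD: "D = insert e1 (insert e2 D0)" "e1 \<notin> D0" "e2 \<notin> D0" "finite D0" unfolding D0_def using e12D finD by auto
  have D0v: "\<not> incident ends v e" if "e \<in> D0" for e using that Dv unfolding D0_def by auto
  have ze: "z' (fst (ends e)) * z' (snd (ends e)) = \<sigma> e" if "e \<in> D0" for e
  proof -
    have eF: "e \<in> F" "e \<noteq> e1" "e \<noteq> e2" using that sub unfolding D0_def by auto
    have "z' (fst (ends e)) = \<zeta> (fst (ends e))" "z' (snd (ends e)) = \<zeta> (snd (ends e))"
      using D0v[OF that] unfolding z'_def incident_def by auto
    moreover have "\<sigma> e * \<sigma> e = 1" using sq1 eF by blast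
    ultimately show ?thesis using zS[OF eF] zsq[of "fst (ends e)"] zsq[of "snd (ends e)"]
      by (metis mult.assoc mult.commute mult_1_right)
  qed
  have ze1: "z' (fst (ends e1)) * z' (snd (ends e1)) = \<zeta> u1" using e(3) uv(1) loopless e(1)
    unfolding z'_def u1_def by (auto simp: incident_def other_end_def)
  have ze2: "z' (fst (ends e2)) * z' (snd (ends e2)) = \<zeta> u2" using e(4) uv(2) loopless e(2)
    unfolding z'_def u2_def by (auto simp: incident_def other_end_def)
  define Q where "Q = (\<Prod>e\<in>D0. \<sigma> e)"
  have "1 = \<zeta> u1 * (\<zeta> u2 * Q)" using P1 ze1 ze2 prod.cong[OF refl ze, of D0] unfolding DD(1) Q_def
    using DD(2,3,4) Sv(2) by simp
  moreover have "(\<Prod>e\<in>D. \<sigma> e) = \<sigma> e1 * (\<sigma> e2 * Q)" unfolding DD(1) Q_def using DD(2,3,4) Sv(2) by simp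
  moreover have "\<sigma> e1 * \<sigma> e1 = 1" "\<sigma> e2 * \<sigma> e2 = 1" using sq1 e by auto
  moreover note zN zsq[of u1] zsq[of u2]
  ultimately show ?thesis by algebra
qed

end

context sg begin

lemma two_edges:
  assumes vW: "v \<in> W" and circ: "circle ends W F C0 D0"
  shows "\<exists>e1 e2. e1 \<noteq> e2 \<and> e1 \<in> F \<and> e2 \<in> F \<and> incident ends v e1 \<and> incident ends v e2"
proof -
  from circ have sub: "C0 \<subseteq> W" "D0 \<subseteq> F" "\<forall>e\<in>D0. fst (ends e) \<in> C0 \<and> snd (ends e) \<in> C0"
    and deg: "\<forall>y\<in>C0. deg2 ends D0 y = 2" and ne: "C0 \<noteq> {}" unfolding circle_def subgraph_def connected_g_def by auto
  have finD: "finite D0" using sub finF finite_subset by blast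
  have llD: "\<forall>e\<in>D0. fst (ends e) \<noteq> snd (ends e)" using loopless sub by auto
  have c2: "card {e\<in>D0. incident ends y e} = 2" if "y \<in> C0" for y
    using deg that deg2_incident[OF finD llD] by simp
  obtain c where c: "c \<in> C0" using ne by blast
  have "{e\<in>D0. incident ends c e} \<noteq> {}"
  proof
    assume h: "{e\<in>D0. incident ends c e} = {}"
    have "card {e\<in>D0. incident ends c e} = 2" using c2[OF c] .
    then show False unfolding h by simp
  qed
  then obtain e where e: "e \<in> D0" "incident ends c e" by blast
  define c' where "c' = other_end ends c e"
  have c': "c' \<in> C0" "c' \<noteq> c" using e sub(3) llD unfolding c'_def by (auto simp: incident_def other_end_def)
  show ?thesis
  proof (cases "v \<in> C0")
    case True
    have "\<exists>a b. {e\<in>D0. incident ends v e} = {a, b} \<and> a \<noteq> b" using c2[OF True] by (simp add: card_2_iff)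
    then obtain a b where ab: "{e\<in>D0. incident ends v e} = {a, b}" "a \<noteq> b" by auto
    have "a \<in> {e\<in>D0. incident ends v e}" "b \<in> {e\<in>D0. incident ends v e}" unfolding ab(1) by simp_all
    then have "a \<in> F \<and> b \<in> F \<and> incident ends v a \<and> incident ends v b" using sub(2) by auto
    then show ?thesis using ab(2) by blast
  next
    case False
    have cW: "c \<in> W" using c sub by auto
    obtain P where P: "walk ends F v P" "wend ends v P = c" using path_all[OF vW cW] by blast
    have "P \<noteq> []" using P(2) False c by auto
    then obtain e1 P' where P': "P = e1 # P'" by (cases P) auto
    have e1: "e1 \<in> F" "incident ends v e1" using P(1) P' by auto
    define u1 where "u1 = other_end ends v e1"
    have u1W: "u1 \<in> W - {v}" using other_W[OF e1] unfolding u1_def .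
    obtain w' where w': "w' \<in> C0" "w' \<noteq> u1" using c c' by blast
    have w'W: "w' \<in> W - {u1}" "v \<in> W - {u1}" using w' sub False vW u1W by auto
    obtain Q where Q: "walk ends {e\<in>F. \<not> incident ends u1 e} v Q" "wend ends v Q = w'"
      using path_minus[OF _ w'W(2,1)] u1W by blast
    have "Q \<noteq> []" using Q(2) w' False by auto
    then obtain e2 Q' where Q': "Q = e2 # Q'" by (cases Q) auto
    have e2: "e2 \<in> F" "incident ends v e2" "\<not> incident ends u1 e2" using Q(1) Q' by auto
    have "incident ends u1 e1" using incident_other[OF e1(2)] unfolding u1_def .
    then have "e1 \<noteq> e2" using e2(3) by auto
    then show ?thesis using e1 e2 by blast
  qed
qed

lemma forward:
  assumes vW: "v \<in> W" and H: "\<forall>C D. circle ends W F C D \<and> v \<in> C \<longrightarrow> (\<Prod>e\<in>D. \<sigma> e) = -1"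
    and circ: "circle ends W F C0 D0"
  shows "degree ends F v = 2 \<and>
          (\<exists>e1 e2. e1 \<noteq> e2 \<and> {e\<in>F. incident ends v e} = {e1, e2} \<and>
             balancing_edge (W - {v}) (down_E F e1 e2) (down_ends ends v e1 e2)
               (down_sigma \<sigma> e1 e2) None)"
proof -
  obtain e1 e2 where e: "e1 \<noteq> e2" "e1 \<in> F" "e2 \<in> F" "incident ends v e1" "incident ends v e2"
    using two_edges[OF vW circ] by blast
  have Sv: "{e\<in>F. incident ends v e} = {e1, e2}"
  proof
    show "{e1, e2} \<subseteq> {e\<in>F. incident ends v e}" using e by auto
    show "{e\<in>F. incident ends v e} \<subseteq> {e1, e2}"
    proof
      fix e3 assume e3: "e3 \<in> {e\<in>F. incident ends v e}"
      show "e3 \<in> {e1, e2}"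
      proof (rule ccontr)
        assume "e3 \<notin> {e1, e2}"
        then show False using theta[OF vW H e(2,3) _ e(4,5) _ e(1)] e3 by auto
      qed
    qed
  qed
  have "degree ends F v = 2" unfolding degree_def Sv using e(1) by simp
  then show ?thesis using balancing[OF vW H Sv e(1)] Sv e(1) by blast
qed

end


theorem mainTheorem12:
  fixes V :: "'v set" and E :: "'e set" and ends :: "'e \<Rightarrow> 'v \<times> 'v"
    and \<sigma> :: "'e \<Rightarrow> int" and W :: "'v set" and F :: "'e set" and v :: 'v
  assumes graph: "is_graph V E ends"
    and sig: "\<forall>e\<in>E. \<sigma> e \<in> {1, -1}"
    and loopless: "\<forall>e\<in>E. fst (ends e) \<noteq> snd (ends e)"
    and blk: "block ends V E W F"
    and has_circle: "\<exists>C D. circle ends W F C D"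
    and vB: "v \<in> W"
  shows "(\<forall>C D. circle ends W F C D \<and> v \<in> C \<longrightarrow> (\<Prod>e\<in>D. \<sigma> e) = -1) \<longleftrightarrow>
         (degree ends F v = 2 \<and>
          (\<exists>e1 e2. e1 \<noteq> e2 \<and> {e\<in>F. incident ends v e} = {e1, e2} \<and>
             balancing_edge (W - {v}) (down_E F e1 e2) (down_ends ends v e1 e2)
               (down_sigma \<sigma> e1 e2) None))"
proof -
  have sub: "W \<subseteq> V" "F \<subseteq> E" "\<forall>e\<in>F. fst (ends e) \<in> W \<and> snd (ends e) \<in> W"
    and con: "connected_g ends W F" and nc: "\<nexists>x. cutpoint ends W F x"
    using blk unfolding block_def subgraph_def by auto
  interpret sg ends W F \<sigma>
  proof
    show "finite W" using graph sub finite_subset unfolding is_graph_def by blast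
    show "finite F" using graph sub finite_subset unfolding is_graph_def by blast
  qed (use sub con nc sig loopless in auto)
  obtain C0 D0 where circ: "circle ends W F C0 D0" using has_circle by blast
  show ?thesis
  proof
    assume H: "\<forall>C D. circle ends W F C D \<and> v \<in> C \<longrightarrow> (\<Prod>e\<in>D. \<sigma> e) = -1"
    show "degree ends F v = 2 \<and>
          (\<exists>e1 e2. e1 \<noteq> e2 \<and> {e\<in>F. incident ends v e} = {e1, e2} \<and>
             balancing_edge (W - {v}) (down_E F e1 e2) (down_ends ends v e1 e2)
               (down_sigma \<sigma> e1 e2) None)"
      using forward[OF vB H circ] .
  next
    assume "degree ends F v = 2 \<and>
          (\<exists>e1 e2. e1 \<noteq> e2 \<and> {e\<in>F. incident ends v e} = {e1, e2} \<and>
             balancing_edge (W - {v}) (down_E F e1 e2) (down_ends ends v e1 e2)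
               (down_sigma \<sigma> e1 e2) None)"
    then obtain e1 e2 where e: "e1 \<noteq> e2" "{e\<in>F. incident ends v e} = {e1, e2}"
      "balancing_edge (W - {v}) (down_E F e1 e2) (down_ends ends v e1 e2) (down_sigma \<sigma> e1 e2) None" by blast
    show "\<forall>C D. circle ends W F C D \<and> v \<in> C \<longrightarrow> (\<Prod>e\<in>D. \<sigma> e) = -1"
      using back_dir[OF e(2,1,3)] by blast
  qed
qed


end
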